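(* In the setting of the context, fix a round $t$ and suppose $\frac12-9L^2\eta_t^2K^2N\sum_{i=1}^Np_i^2\ge C>0$ and $\frac{L\eta_t^2K}{2}-\frac{\eta_t}{2}\le0$. Under (A1)–(A3), $$\mathbb{E}f(V_{t+1})\le\mathbb{E}f(W_t)-C\eta_tK\,\mathbb{E}\|\nabla f(W_t)\|^2+\frac32L^2\eta_t^3K^2N(\sigma_l^2+6K\sigma_g^2)\sum_{i=1}^Np_i^2+\frac{L\eta_t^2K^2N}{2}\sigma_l^2\sum_{i=1}^Np_i^2.$$
   Context: Fix integers $N,K\ge1$; matrices in $\mathbb{R}^{d\times k}$ with Frobenius norm $\|\cdot\|$. Client losses $f_i$ are differentiable, $p_i\ge0$ with $\sum_ip_i=1$, $f=\sum_ip_if_i$. Stochastic gradients $\tilde\nabla f_i(W)$ use fresh randomness per call. (A1) $f$, each $f_i$ and each per-sample loss have $L$-Lipschitz gradients. (A2) Conditionally on the past, $\mathbb{E}\tilde\nabla f_i(W)=\nabla f_i(W)$, $\mathbb{E}\|\tilde\nabla f_i(W)-\nabla f_i(W)\|^2\le\sigma_l^2$. (A3) $\mathbb{E}\|\nabla f(W)-\nabla f_i(W)\|^2\le\sigma_g^2$ for all $W,i$, $\sigma_g^2>0$. $W_t$ is the (random) global model at round $t$ of the FedHL scheme. Auxiliary full-rank iterate: $W^i_{t,0}=W_t$, $W^i_{t,\tau+1}=W^i_{t,\tau}-\eta_t\tilde\nabla f_i(W^i_{t,\tau})$ for $\tau=0,\dots,K-1$, and $V_{t+1}=\sum_ip_i\big(W_t-\eta_t\sum_{\tau=0}^{K-1}\tilde\nabla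 f_i(W^i_{t,\tau})\big)$. *)

theory Defs
  imports "HOL-Analysis.Analysis" "HOL-Probability.Probability"
begin

(* Matrices in R^{d x k} are modelled as real^'k^'d; the HOL-Analysis norm on this
   type is the Euclidean norm of all entries, i.e. the Frobenius norm.

   Randomness: a probability space M; the global model W_t is a random variable
   Wt :: 'w => real^'k^'d; the fresh randomness used by the tau-th stochastic
   gradient call of client i is xi i tau :: 'w => 'x (values in the measurable
   space X); the stochastic gradient of client i at W with sample x is G i W x. *)

fun loc_iter :: "(nat \<Rightarrow> real^'k^'d \<Rightarrow> 'x \<Rightarrow> real^'k^'d) \<Rightarrow> real \<Rightarrow> ('w \<Rightarrow> real^'k^'d)
    \<Rightarrow> (nat \<Rightarrow> nat \<Rightarrow> 'w \<Rightarrow> 'x) \<Rightarrow> nat \<Rightarrow> nat \<Rightarrow> 'w \<Rightarrow> real^'k^'d" where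
  "loc_iter G eta Wt xi i 0 \<omega> = Wt \<omega>"
| "loc_iter G eta Wt xi i (Suc \<tau>) \<omega> =
     loc_iter G eta Wt xi i \<tau> \<omega> - eta *\<^sub>R G i (loc_iter G eta Wt xi i \<tau> \<omega>) (xi i \<tau> \<omega>)"

definition V_next :: "(nat \<Rightarrow> real^'k^'d \<Rightarrow> 'x \<Rightarrow> real^'k^'d) \<Rightarrow> real \<Rightarrow> ('w \<Rightarrow> real^'k^'d)
    \<Rightarrow> (nat \<Rightarrow> nat \<Rightarrow> 'w \<Rightarrow> 'x) \<Rightarrow> (nat \<Rightarrow> real) \<Rightarrow> nat \<Rightarrow> nat \<Rightarrow> 'w \<Rightarrow> real^'k^'d" where
  "V_next G eta Wt xi p N K \<omega> =
     (\<Sum>i\<in>{1..N}. p i *\<^sub>R (Wt \<omega> - eta *\<^sub>R (\<Sum>\<tau><K. G i (loc_iter G eta Wt xi i \<tau> \<omega>) (xi i \<tau> \<omega>))))"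

definition past :: "'w measure \<Rightarrow> ('w \<Rightarrow> real^'k^'d) \<Rightarrow> 'x measure
    \<Rightarrow> (nat \<Rightarrow> nat \<Rightarrow> 'w \<Rightarrow> 'x) \<Rightarrow> nat \<Rightarrow> nat \<Rightarrow> 'w measure" where
  "past M Wt X xi i \<tau> =
     vimage_algebra (space M) (\<lambda>\<omega>. (Wt \<omega>, \<lambda>s\<in>{..<\<tau>}. xi i s \<omega>))
       (borel \<Otimes>\<^sub>M (\<Pi>\<^sub>M s\<in>{..<\<tau>}. X))"

end

theory Submission
  imports Defs
begin


lemma descent:
  fixes f :: "'a::real_inner \<Rightarrow> real" and gf :: "'a \<Rightarrow> 'a"
  assumes d: "\<And>x. (f has_derivative (\<lambda>h. gf x \<bullet> h)) (at x)"
    and lip: "\<And>x y. norm (gf x - gf y) \<le> L * norm (x - y)"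
  shows "f y \<le> f x + gf x \<bullet> (y - x) + L / 2 * (norm (y - x))\<^sup>2"
    and "f y \<ge> f x + gf x \<bullet> (y - x) - L / 2 * (norm (y - x))\<^sup>2"
proof -
  define h where "h = y - x"
  have D: "((\<lambda>t. f (x + t *\<^sub>R h)) has_real_derivative (gf (x + t *\<^sub>R h) \<bullet> h)) (at t)" for t
  proof -
    have "((\<lambda>t. x + t *\<^sub>R h) has_derivative (\<lambda>s. s *\<^sub>R h)) (at t)"
      by (auto intro!: derivative_eq_intros)
    from has_derivative_compose[OF this d]
    have "((\<lambda>t. f (x + t *\<^sub>R h)) has_derivative (\<lambda>s. gf (x + t *\<^sub>R h) \<bullet> (s *\<^sub>R h))) (at t)" .
    then show ?thesis
      unfolding has_field_derivative_def by (rule has_derivative_eq_rhs) (auto simp: fun_eq_iff)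
  qed
  have ip: "\<bar>(gf (x + t *\<^sub>R h) - gf x) \<bullet> h\<bar> \<le> L * \<bar>t\<bar> * (norm h)\<^sup>2" for t
  proof -
    have "\<bar>(gf (x + t *\<^sub>R h) - gf x) \<bullet> h\<bar> \<le> norm (gf (x + t *\<^sub>R h) - gf x) * norm h"
      by (rule Cauchy_Schwarz_ineq2)
    also have "\<dots> \<le> L * norm (t *\<^sub>R h) * norm h"
      using lip[of "x + t *\<^sub>R h" x] by (simp add: mult_right_mono)
    finally show ?thesis by (simp add: power2_eq_square mult.assoc)
  qed
  define P where "P = (\<lambda>t. f (x + t *\<^sub>R h) - t * (gf x \<bullet> h) - L / 2 * t\<^sup>2 * (norm h)\<^sup>2)"
  define Q where "Q = (\<lambda>t. f (x + t *\<^sub>R h) - t * (gf x \<bullet> h) + L / 2 * t\<^sup>2 * (norm h)\<^sup>2)"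
  have DP: "(P has_real_derivative (gf (x + t *\<^sub>R h) \<bullet> h - gf x \<bullet> h - L * t * (norm h)\<^sup>2)) (at t)" for t
    unfolding P_def by (rule derivative_eq_intros D refl | simp)+
  have DQ: "(Q has_real_derivative (gf (x + t *\<^sub>R h) \<bullet> h - gf x \<bullet> h + L * t * (norm h)\<^sup>2)) (at t)" for t
    unfolding Q_def by (rule derivative_eq_intros D refl | simp)+
  obtain z where z: "0 < z" "z < 1" "P 1 - P 0 = (1 - 0) * (gf (x + z *\<^sub>R h) \<bullet> h - gf x \<bullet> h - L * z * (norm h)\<^sup>2)"
    using MVT2[of 0 1 P "\<lambda>t. gf (x + t *\<^sub>R h) \<bullet> h - gf x \<bullet> h - L * t * (norm h)\<^sup>2"] DP by auto
  have "gf (x + z *\<^sub>R h) \<bullet> h - gf x \<bullet> h \<le> L * z * (norm h)\<^sup>2"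
    using ip[of z] z by (simp add: inner_diff_left)
  hence "P 1 \<le> P 0" using z by simp
  thus "f y \<le> f x + gf x \<bullet> (y - x) + L / 2 * (norm (y - x))\<^sup>2"
    unfolding P_def h_def by simp
  obtain z where z: "0 < z" "z < 1" "Q 1 - Q 0 = (1 - 0) * (gf (x + z *\<^sub>R h) \<bullet> h - gf x \<bullet> h + L * z * (norm h)\<^sup>2)"
    using MVT2[of 0 1 Q "\<lambda>t. gf (x + t *\<^sub>R h) \<bullet> h - gf x \<bullet> h + L * t * (norm h)\<^sup>2"] DQ by auto
  have "gf (x + z *\<^sub>R h) \<bullet> h - gf x \<bullet> h \<ge> - (L * z * (norm h)\<^sup>2)"
    using ip[of z] z by (simp add: inner_diff_left)
  hence "Q 1 \<ge> Q 0" using z by simp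
  thus "f y \<ge> f x + gf x \<bullet> (y - x) - L / 2 * (norm (y - x))\<^sup>2"
    unfolding Q_def h_def by simp
qed

lemma norm_sum_sq_weighted:
  fixes x :: "'i \<Rightarrow> 'a::real_normed_vector"
  shows "(norm (\<Sum>i\<in>I. p i *\<^sub>R x i))\<^sup>2 \<le> (\<Sum>i\<in>I. (p i)\<^sup>2) * (\<Sum>i\<in>I. (norm (x i))\<^sup>2)"
proof -
  have "norm (\<Sum>i\<in>I. p i *\<^sub>R x i) \<le> (\<Sum>i\<in>I. \<bar>p i\<bar> * norm (x i))"
    by (rule order_trans[OF norm_sum]) simp
  hence "(norm (\<Sum>i\<in>I. p i *\<^sub>R x i))\<^sup>2 \<le> (\<Sum>i\<in>I. \<bar>p i\<bar> * norm (x i))\<^sup>2"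
    by (simp add: power_mono)
  also have "\<dots> \<le> (\<Sum>i\<in>I. \<bar>p i\<bar>\<^sup>2) * (\<Sum>i\<in>I. (norm (x i))\<^sup>2)"
    by (rule Cauchy_Schwarz_ineq_sum)
  finally show ?thesis by simp
qed

lemma norm_sum_sq_card:
  fixes x :: "'i \<Rightarrow> 'a::real_normed_vector"
  shows "(norm (\<Sum>i\<in>I. x i))\<^sup>2 \<le> real (card I) * (\<Sum>i\<in>I. (norm (x i))\<^sup>2)"
  using norm_sum_sq_weighted[of "\<lambda>_. 1" x I] by simp

lemma young_sq:
  fixes a b :: "'a::real_inner"
  assumes "c > 0"
  shows "(norm (a + b))\<^sup>2 \<le> (1 + c) * (norm a)\<^sup>2 + (1 + 1 / c) * (norm b)\<^sup>2"
proof -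
  have "2 * (a \<bullet> b) \<le> 2 * (norm a * norm b)"
    using Cauchy_Schwarz_ineq2[of a b] by simp
  also have "\<dots> \<le> c * (norm a)\<^sup>2 + 1 / c * (norm b)\<^sup>2"
  proof -
    have "0 \<le> (c * norm a - norm b)\<^sup>2 / c" using assms by simp
    also have "\<dots> = c * (norm a)\<^sup>2 + 1 / c * (norm b)\<^sup>2 - 2 * (norm a * norm b)"
      using assms by (simp add: field_simps power2_eq_square)
    finally show ?thesis by simp
  qed
  moreover have "(norm (a+b))\<^sup>2 = (norm a)\<^sup>2 + 2*(a \<bullet> b) + (norm b)\<^sup>2"
    by (simp add: power2_norm_eq_inner algebra_simps inner_commute)
  ultimately show ?thesis by (simp add: algebra_simps)
qed

lemma sq_sum2: "(norm (a + b :: 'a::real_inner))\<^sup>2 \<le> 2 * (norm a)\<^sup>2 + 2 * (norm b)\<^sup>2"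
  using young_sq[of 1 a b] by simp

lemma sq_sum3: "(norm (a + b + c :: 'a::real_inner))\<^sup>2 \<le> 3 * (norm a)\<^sup>2 + 3 * (norm b)\<^sup>2 + 3 * (norm c)\<^sup>2"
proof -
  have "(norm (a + b + c))\<^sup>2 \<le> (3/2) * (norm (a + b))\<^sup>2 + 3 * (norm c)\<^sup>2"
    using young_sq[of "1/2" "a+b" c] by simp
  also have "\<dots> \<le> (3/2) * (2 * (norm a)\<^sup>2 + 2 * (norm b)\<^sup>2) + 3 * (norm c)\<^sup>2"
    using sq_sum2[of a b] by simp
  finally show ?thesis by (simp add: algebra_simps)
qed

lemma polar_ineq: "- (a \<bullet> b) = ((norm (a - b))\<^sup>2 - (norm a)\<^sup>2 - (norm b)\<^sup>2) / 2"
  for a b :: "'a::real_inner"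
  by (simp add: power2_norm_eq_inner inner_diff_left inner_diff_right inner_commute)




definition sqi :: "'a measure \<Rightarrow> ('a \<Rightarrow> 'b::euclidean_space) \<Rightarrow> bool" where
  "sqi M Y \<longleftrightarrow> Y \<in> borel_measurable M \<and> integrable M (\<lambda>\<omega>. (norm (Y \<omega>))\<^sup>2)"

context finite_measure
begin

lemma sqi_bound:
  assumes "Y \<in> borel_measurable M" "integrable M h" "\<And>\<omega>. (norm (Y \<omega>))\<^sup>2 \<le> h \<omega>"
  shows "sqi M Y"
  unfolding sqi_def
proof (intro conjI assms(1))
  show "integrable M (\<lambda>\<omega>. (norm (Y \<omega>))\<^sup>2)"
    apply (rule Bochner_Integration.integrable_bound[OF assms(2)])
    using assms(1) apply measurable
    using assms(3) by (auto intro!: AE_I2 intro: order_trans[OF assms(3) abs_ge_self])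
qed

lemma sqi_add: "sqi M X \<Longrightarrow> sqi M Y \<Longrightarrow> sqi M (\<lambda>\<omega>. X \<omega> + Y \<omega>)"
  by (rule sqi_bound[where h="\<lambda>\<omega>. 2 * (norm (X \<omega>))\<^sup>2 + 2 * (norm (Y \<omega>))\<^sup>2"])
     (auto simp: sqi_def sq_sum2)

lemma sqi_scaleR: "sqi M X \<Longrightarrow> sqi M (\<lambda>\<omega>. c *\<^sub>R X \<omega>)"
  by (rule sqi_bound[where h="\<lambda>\<omega>. c\<^sup>2 * (norm (X \<omega>))\<^sup>2"])
     (auto simp: sqi_def power_mult_distrib)

lemma sqi_uminus: "sqi M X \<Longrightarrow> sqi M (\<lambda>\<omega>. - X \<omega>)"
  using sqi_scaleR[of X "-1"] by simp

lemma sqi_diff: "sqi M X \<Longrightarrow> sqi M Y \<Longrightarrow> sqi M (\<lambda>\<omega>. X \<omega> - Y \<omega>)"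
  using sqi_add[of X "\<lambda>\<omega>. - Y \<omega>"] sqi_uminus[of Y] by simp

lemma sqi_zero: "sqi M (\<lambda>\<omega>. 0)"
  by (simp add: sqi_def)

lemma sqi_sum: "finite I \<Longrightarrow> (\<And>i. i \<in> I \<Longrightarrow> sqi M (X i)) \<Longrightarrow> sqi M (\<lambda>\<omega>. \<Sum>i\<in>I. X i \<omega>)"
  by (induction I rule: finite_induct) (auto intro: sqi_add sqi_zero)

lemma sqi_const_bound: "Y \<in> borel_measurable M \<Longrightarrow> (\<And>\<omega>. (norm (Y \<omega>))\<^sup>2 \<le> c) \<Longrightarrow> sqi M Y"
  by (rule sqi_bound[where h="\<lambda>_. c"]) auto

lemma sqi_le: "Y \<in> borel_measurable M \<Longrightarrow> sqi M Z \<Longrightarrow> (\<And>\<omega>. norm (Y \<omega>) \<le> norm (Z \<omega>)) \<Longrightarrow> sqi M Y"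
  by (rule sqi_bound[where h="\<lambda>\<omega>. (norm (Z \<omega>))\<^sup>2"]) (auto simp: sqi_def power_mono)

lemma sqi_norm_sq_int: "sqi M X \<Longrightarrow> integrable M (\<lambda>\<omega>. (norm (X \<omega>))\<^sup>2)"
  by (simp add: sqi_def)

lemma sqi_meas: "sqi M X \<Longrightarrow> X \<in> borel_measurable M"
  by (simp add: sqi_def)

lemma sqi_prod_int:
  fixes a b :: "'a \<Rightarrow> real" and X :: "'a \<Rightarrow> 'b::real_normed_vector" and Y :: "'a \<Rightarrow> 'c::real_normed_vector"
  assumes "a \<in> borel_measurable M" "b \<in> borel_measurable M"
    "integrable M (\<lambda>\<omega>. (norm (X \<omega>))\<^sup>2)" "integrable M (\<lambda>\<omega>. (norm (Y \<omega>))\<^sup>2)"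
    "\<And>\<omega>. \<bar>a \<omega>\<bar> \<le> norm (X \<omega>)" "\<And>\<omega>. \<bar>b \<omega>\<bar> \<le> norm (Y \<omega>)"
  shows "integrable M (\<lambda>\<omega>. a \<omega> * b \<omega>)"
proof (rule Bochner_Integration.integrable_bound[where f="\<lambda>\<omega>. (norm (X \<omega>))\<^sup>2 + (norm (Y \<omega>))\<^sup>2"])
  show "integrable M (\<lambda>\<omega>. (norm (X \<omega>))\<^sup>2 + (norm (Y \<omega>))\<^sup>2)" using assms by auto
  show "(\<lambda>\<omega>. a \<omega> * b \<omega>) \<in> borel_measurable M" using assms by measurable
  show "AE \<omega> in M. norm (a \<omega> * b \<omega>) \<le> norm ((norm (X \<omega>))\<^sup>2 + (norm (Y \<omega>))\<^sup>2)"
  proof (rule AE_I2)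
    fix \<omega>
    have "\<bar>a \<omega> * b \<omega>\<bar> \<le> norm (X \<omega>) * norm (Y \<omega>)"
      by (simp add: abs_mult assms(5,6) mult_mono')
    also have "\<dots> \<le> (norm (X \<omega>))\<^sup>2 + (norm (Y \<omega>))\<^sup>2"
      using sum_squares_bound[of "norm (X \<omega>)" "norm (Y \<omega>)"]
        mult_nonneg_nonneg[OF norm_ge_zero norm_ge_zero, of "X \<omega>" "Y \<omega>"] by linarith
    finally show "norm (a \<omega> * b \<omega>) \<le> norm ((norm (X \<omega>))\<^sup>2 + (norm (Y \<omega>))\<^sup>2)" by simp
  qed
qed

lemma sqi_inner_int: "sqi M X \<Longrightarrow> sqi M Y \<Longrightarrow> integrable M (\<lambda>\<omega>. X \<omega> \<bullet> Y \<omega>)"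
proof -
  assume a: "sqi M X" "sqi M Y"
  have *: "integrable M (\<lambda>\<omega>. norm (X \<omega>) * norm (Y \<omega>))"
    by (rule sqi_prod_int[of _ _ X Y]) (use a in \<open>auto simp: sqi_def\<close>)
  show ?thesis
    apply (rule Bochner_Integration.integrable_bound[OF *])
    using a apply (simp add: sqi_def)
    by (auto intro!: AE_I2 simp: Cauchy_Schwarz_ineq2)
qed

end




locale fl =
  fixes M :: "'w measure" and X :: "'x measure"
    and N K :: nat and L eta sigma_l sigma_g :: real
    and p :: "nat \<Rightarrow> real"
    and f :: "real^'k^'d \<Rightarrow> real" and gf :: "real^'k^'d \<Rightarrow> real^'k^'d"
    and F :: "nat \<Rightarrow> real^'k^'d \<Rightarrow> real" and gF :: "nat \<Rightarrow> real^'k^'d \<Rightarrow> real^'k^'d"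
    and G :: "nat \<Rightarrow> real^'k^'d \<Rightarrow> 'x \<Rightarrow> real^'k^'d"
    and Wt :: "'w \<Rightarrow> real^'k^'d"
    and xi :: "nat \<Rightarrow> nat \<Rightarrow> 'w \<Rightarrow> 'x"
    and C :: real
  assumes prob: "prob_space M"
    and N_pos: "N \<ge> 1" and K_pos: "K \<ge> 1"
    and p_nonneg: "\<And>i. i \<in> {1..N} \<Longrightarrow> p i \<ge> 0"
    and p_sum: "(\<Sum>i\<in>{1..N}. p i) = 1"
    and f_def: "\<And>W. f W = (\<Sum>i\<in>{1..N}. p i * F i W)"
    and f_grad: "\<And>W. (f has_derivative (\<lambda>h. gf W \<bullet> h)) (at W)"
    and F_grad: "\<And>i W. i \<in> {1..N} \<Longrightarrow> (F i has_derivative (\<lambda>h. gF i W \<bullet> h)) (at W)"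
    and A1_f: "\<And>W W'. norm (gf W - gf W') \<le> L * norm (W - W')"
    and A1_F: "\<And>i W W'. i \<in> {1..N} \<Longrightarrow> norm (gF i W - gF i W') \<le> L * norm (W - W')"
    and Wt_meas: "Wt \<in> borel_measurable M"
    and xi_meas: "\<And>i \<tau>. i \<in> {1..N} \<Longrightarrow> \<tau> < K \<Longrightarrow> xi i \<tau> \<in> M \<rightarrow>\<^sub>M X"
    and G_meas: "\<And>i. i \<in> {1..N} \<Longrightarrow> (\<lambda>(W, x). G i W x) \<in> borel_measurable (borel \<Otimes>\<^sub>M X)"
    and A2_integrable: "\<And>i \<tau>. i \<in> {1..N} \<Longrightarrow> \<tau> < K \<Longrightarrow>
        integrable M (\<lambda>\<omega>. (norm (G i (loc_iter G eta Wt xi i \<tau> \<omega>) (xi i \<tau> \<omega>)))\<^sup>2)"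
    and A2_unbiased: "\<And>i \<tau> v. i \<in> {1..N} \<Longrightarrow> \<tau> < K \<Longrightarrow>
        AE \<omega> in M. real_cond_exp M (past M Wt X xi i \<tau>)
            (\<lambda>\<omega>. G i (loc_iter G eta Wt xi i \<tau> \<omega>) (xi i \<tau> \<omega>) \<bullet> v) \<omega>
          = gF i (loc_iter G eta Wt xi i \<tau> \<omega>) \<bullet> v"
    and A2_var: "\<And>i \<tau>. i \<in> {1..N} \<Longrightarrow> \<tau> < K \<Longrightarrow>
        AE \<omega> in M. real_cond_exp M (past M Wt X xi i \<tau>)
            (\<lambda>\<omega>. (norm (G i (loc_iter G eta Wt xi i \<tau> \<omega>) (xi i \<tau> \<omega>)
                          - gF i (loc_iter G eta Wt xi i \<tau> \<omega>)))\<^sup>2) \<omega>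
          \<le> sigma_l\<^sup>2"
    and A3: "\<And>i W. i \<in> {1..N} \<Longrightarrow> (norm (gf W - gF i W))\<^sup>2 \<le> sigma_g\<^sup>2"
    and int_f: "integrable M (\<lambda>\<omega>. f (Wt \<omega>))"
    and int_grad: "integrable M (\<lambda>\<omega>. (norm (gf (Wt \<omega>)))\<^sup>2)"
    and step1: "1/2 - 9 * L\<^sup>2 * eta\<^sup>2 * K\<^sup>2 * N * (\<Sum>i\<in>{1..N}. (p i)\<^sup>2) \<ge> C"
    and step2: "L * eta\<^sup>2 * K / 2 - eta / 2 \<le> 0"
    and C_pos: "C > 0"
begin

interpretation P: prob_space M by (rule prob)

abbreviation "W i \<tau> \<equiv> loc_iter G eta Wt xi i \<tau>"
abbreviation "g i \<tau> \<omega> \<equiv> G i (W i \<tau> \<omega>) (xi i \<tau> \<omega>)"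
abbreviation "D i \<tau> \<omega> \<equiv> gF i (W i \<tau> \<omega>)"
abbreviation "PS \<tau> \<equiv> (borel :: (real^'k^'d) measure) \<Otimes>\<^sub>M (\<Pi>\<^sub>M s\<in>{..<\<tau>}. X)"
definition "T i \<tau> \<omega> = (Wt \<omega>, \<lambda>s\<in>{..<\<tau>}. xi i s \<omega>)"
definition "Phi i s z = loc_iter G eta fst (\<lambda>_ s z. snd z s) i s (z :: (real^'k^'d) \<times> (nat \<Rightarrow> 'x))"

lemma L_nonneg: "L \<ge> 0"
proof -
  obtain b :: "real^'k^'d" where b: "b \<in> Basis" using nonempty_Basis by blast
  have "norm (gf b - gf 0) \<le> L * norm b" using A1_f[of b 0] by simp
  then have "0 \<le> L * norm b" by (rule order_trans[OF norm_ge_zero])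
  moreover have "norm b = 1" using b by simp
  ultimately show ?thesis by simp
qed

lemma eta_nonneg: "eta \<ge> 0"
proof (rule ccontr)
  assume "\<not> eta \<ge> 0"
  then have "eta < 0" by simp
  moreover have "L * eta\<^sup>2 * K / 2 \<ge> 0" using L_nonneg by simp
  ultimately show False using step2 by linarith
qed

lemma lip_cont: "(\<And>x y. norm (h x - h y) \<le> L * norm (x - y)) \<Longrightarrow> continuous_on UNIV (h :: real^'k^'d \<Rightarrow> real^'k^'d)"
  by (rule lipschitz_on_continuous_on[of L]) (auto intro!: lipschitz_onI simp: dist_norm L_nonneg)

lemma gf_meas[measurable]: "gf \<in> borel_measurable borel"
  by (rule borel_measurable_continuous_onI, rule lip_cont, rule A1_f)

lemma gF_meas[measurable]: "i \<in> {1..N} \<Longrightarrow> gF i \<in> borel_measurable borel"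
  by (rule borel_measurable_continuous_onI, rule lip_cont, rule A1_F)

lemma f_meas[measurable]: "f \<in> borel_measurable borel"
proof (rule borel_measurable_continuous_onI)
  show "continuous_on UNIV f"
    by (rule continuous_at_imp_continuous_on) (use has_derivative_continuous[OF f_grad] in auto)
qed

lemma G_comp_meas:
  assumes "i \<in> {1..N}" "A \<in> N' \<rightarrow>\<^sub>M borel" "B \<in> N' \<rightarrow>\<^sub>M X"
  shows "(\<lambda>\<omega>. G i (A \<omega>) (B \<omega>)) \<in> borel_measurable N'"
  using measurable_compose[OF measurable_Pair[OF assms(2,3)] G_meas[OF assms(1)]] by simp

lemma W_meas: "i \<in> {1..N} \<Longrightarrow> \<tau> \<le> K \<Longrightarrow> W i \<tau> \<in> borel_measurable M"
proof (induction \<tau>)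
  case 0 then show ?case using Wt_meas by simp
next
  case (Suc \<tau>)
  then have "W i \<tau> \<in> borel_measurable M" "xi i \<tau> \<in> M \<rightarrow>\<^sub>M X" using xi_meas by auto
  then have "g i \<tau> \<in> borel_measurable M" using G_comp_meas Suc by blast
  then show ?case using \<open>W i \<tau> \<in> borel_measurable M\<close> by simp
qed

lemma g_meas: "i \<in> {1..N} \<Longrightarrow> \<tau> < K \<Longrightarrow> g i \<tau> \<in> borel_measurable M"
  by (rule G_comp_meas[OF _ W_meas xi_meas]) auto

lemma D_meas: "i \<in> {1..N} \<Longrightarrow> \<tau> \<le> K \<Longrightarrow> D i \<tau> \<in> borel_measurable M"
  using measurable_compose[OF W_meas gF_meas] by simp

lemma T_meas: "i \<in> {1..N} \<Longrightarrow> \<tau> \<le> K \<Longrightarrow> T i \<tau> \<in> M \<rightarrow>\<^sub>M PS \<tau>"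
  unfolding T_def
  by (intro measurable_Pair Wt_meas measurable_restrict xi_meas) auto

lemma past_eq: "past M Wt X xi i \<tau> = vimage_algebra (space M) (T i \<tau>) (PS \<tau>)"
  unfolding past_def T_def by simp

lemma past_sub: "i \<in> {1..N} \<Longrightarrow> \<tau> \<le> K \<Longrightarrow> sigma_finite_subalgebra M (past M Wt X xi i \<tau>)"
proof -
  assume a: "i \<in> {1..N}" "\<tau> \<le> K"
  have sub: "subalgebra M (past M Wt X xi i \<tau>)"
    unfolding subalgebra_def past_eq using sets_image_in_sets[OF refl T_meas[OF a]] by simp
  show ?thesis
    by (rule sigma_finite_subalgebra.intro[OF sub])
       (rule finite_measure.sigma_finite_measure, rule finite_measure_restr_to_subalg[OF sub],
        rule P.finite_measure_axioms)
qed

lemma past_comp: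
  assumes "i \<in> {1..N}" "\<tau> \<le> K" "h \<in> PS \<tau> \<rightarrow>\<^sub>M Y"
  shows "(\<lambda>\<omega>. h (T i \<tau> \<omega>)) \<in> past M Wt X xi i \<tau> \<rightarrow>\<^sub>M Y"
proof -
  have "T i \<tau> \<in> space M \<rightarrow> space (PS \<tau>)" using measurable_space[OF T_meas[OF assms(1,2)]] by auto
  from measurable_vimage_algebra1[OF this]
  have "T i \<tau> \<in> past M Wt X xi i \<tau> \<rightarrow>\<^sub>M PS \<tau>" unfolding past_eq .
  from measurable_compose[OF this assms(3)] show ?thesis .
qed

lemma snd_meas: "s < \<tau> \<Longrightarrow> (\<lambda>z. snd z s) \<in> PS \<tau> \<rightarrow>\<^sub>M X"
  using measurable_compose[OF measurable_snd measurable_component_singleton[of s "{..<\<tau>}" "\<lambda>_. X"]] by simp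

lemma Phi_meas: "i \<in> {1..N} \<Longrightarrow> s \<le> \<tau> \<Longrightarrow> Phi i s \<in> borel_measurable (PS \<tau>)"
proof (induction s)
  case 0 then show ?case by (simp add: Phi_def)
next
  case (Suc s)
  then have m: "Phi i s \<in> borel_measurable (PS \<tau>)" by simp
  have "(\<lambda>z. G i (Phi i s z) (snd z s)) \<in> borel_measurable (PS \<tau>)"
    by (rule G_comp_meas[OF Suc.prems(1) m snd_meas]) (use Suc in simp)
  then show ?case using m unfolding Phi_def by simp
qed

lemma W_eq: "s \<le> \<tau> \<Longrightarrow> W i s \<omega> = Phi i s (T i \<tau> \<omega>)"
  by (induction s) (auto simp: Phi_def T_def)

lemma W_past: "i \<in> {1..N} \<Longrightarrow> s \<le> \<tau> \<Longrightarrow> \<tau> \<le> K \<Longrightarrow> W i s \<in> borel_measurable (past M Wt X xi i \<tau>)"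
  using past_comp[OF _ _ Phi_meas] W_eq by (simp cong: measurable_cong)

lemma xi_past: "i \<in> {1..N} \<Longrightarrow> s < \<tau> \<Longrightarrow> \<tau> \<le> K \<Longrightarrow> xi i s \<in> past M Wt X xi i \<tau> \<rightarrow>\<^sub>M X"
  using past_comp[OF _ _ snd_meas, of i \<tau> s] by (simp add: T_def)

lemma Wt_past: "i \<in> {1..N} \<Longrightarrow> \<tau> \<le> K \<Longrightarrow> Wt \<in> borel_measurable (past M Wt X xi i \<tau>)"
proof -
  assume a: "i \<in> {1..N}" "\<tau> \<le> K"
  have "W i 0 = Wt" by (rule ext) simp
  then show ?thesis using W_past[of i 0 \<tau>] a by simp
qed

lemma g_past: "i \<in> {1..N} \<Longrightarrow> s < \<tau> \<Longrightarrow> \<tau> \<le> K \<Longrightarrow> g i s \<in> borel_measurable (past M Wt X xi i \<tau>)"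
  by (rule G_comp_meas[OF _ W_past xi_past]) auto


end



context fl
begin

interpretation P: prob_space M by (rule prob)

abbreviation "nz i \<tau> \<omega> \<equiv> g i \<tau> \<omega> - D i \<tau> \<omega>"

lemma W_diff_eq: "W i \<tau> \<omega> - Wt \<omega> = - (eta *\<^sub>R (\<Sum>s<\<tau>. g i s \<omega>))"
  by (induction \<tau>) (auto simp: algebra_simps)

lemma sqi_g: "i \<in> {1..N} \<Longrightarrow> \<tau> < K \<Longrightarrow> sqi M (g i \<tau>)"
  using g_meas A2_integrable by (simp add: sqi_def)

lemma sqi_Wdiff: "i \<in> {1..N} \<Longrightarrow> \<tau> \<le> K \<Longrightarrow> sqi M (\<lambda>\<omega>. W i \<tau> \<omega> - Wt \<omega>)"
  unfolding W_diff_eq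
  by (intro P.sqi_uminus P.sqi_scaleR P.sqi_sum sqi_g) auto

lemma sqi_gfW: "sqi M (\<lambda>\<omega>. gf (Wt \<omega>))"
  using int_grad measurable_compose[OF Wt_meas gf_meas] by (simp add: sqi_def)

lemma sqi_gFW: "i \<in> {1..N} \<Longrightarrow> sqi M (\<lambda>\<omega>. gF i (Wt \<omega>))"
proof -
  assume i: "i \<in> {1..N}"
  have m: "(\<lambda>\<omega>. gF i (Wt \<omega>)) \<in> borel_measurable M"
    using measurable_compose[OF Wt_meas gF_meas[OF i]] .
  have "sqi M (\<lambda>\<omega>. gf (Wt \<omega>) - gF i (Wt \<omega>))"
    by (rule P.sqi_const_bound[OF _ A3[OF i]]) (use m measurable_compose[OF Wt_meas gf_meas] in measurable)
  from P.sqi_diff[OF sqi_gfW this] show ?thesis by simp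
qed

lemma sqi_D: "i \<in> {1..N} \<Longrightarrow> \<tau> \<le> K \<Longrightarrow> sqi M (D i \<tau>)"
proof -
  assume a: "i \<in> {1..N}" "\<tau> \<le> K"
  have "sqi M (\<lambda>\<omega>. D i \<tau> \<omega> - gF i (Wt \<omega>))"
  proof (rule P.sqi_le[OF _ P.sqi_scaleR[OF sqi_Wdiff[OF a]], of _ L])
    show "(\<lambda>\<omega>. D i \<tau> \<omega> - gF i (Wt \<omega>)) \<in> borel_measurable M"
      using D_meas[OF a] measurable_compose[OF Wt_meas gF_meas[OF a(1)]] by measurable
    show "norm (D i \<tau> \<omega> - gF i (Wt \<omega>)) \<le> norm (L *\<^sub>R (W i \<tau> \<omega> - Wt \<omega>))" for \<omega>
      using A1_F[OF a(1)] L_nonneg by simp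
  qed
  from P.sqi_add[OF this sqi_gFW[OF a(1)]] show ?thesis by simp
qed

lemma sqi_nz: "i \<in> {1..N} \<Longrightarrow> \<tau> < K \<Longrightarrow> sqi M (nz i \<tau>)"
  using P.sqi_diff[OF sqi_g sqi_D] by simp

lemma D_past: "i \<in> {1..N} \<Longrightarrow> s \<le> \<tau> \<Longrightarrow> \<tau> \<le> K \<Longrightarrow> D i s \<in> borel_measurable (past M Wt X xi i \<tau>)"
  using measurable_compose[OF W_past gF_meas] by simp

lemma orth:
  assumes i: "i \<in> {1..N}" and t: "\<tau> < K"
    and Ym: "Y \<in> borel_measurable (past M Wt X xi i \<tau>)" and Ys: "sqi M Y"
  shows "(\<integral>\<omega>. Y \<omega> \<bullet> g i \<tau> \<omega> \<partial>M) = (\<integral>\<omega>. Y \<omega> \<bullet> D i \<tau> \<omega> \<partial>M)"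
proof -
  interpret S: sigma_finite_subalgebra M "past M Wt X xi i \<tau>" using past_sub i t by simp
  have gm: "g i \<tau> \<in> borel_measurable M" using g_meas i t .
  have Dm: "D i \<tau> \<in> borel_measurable M" using D_meas i t by simp
  have YM: "Y \<in> borel_measurable M" using Ys by (simp add: sqi_def)
  have gs: "integrable M (\<lambda>\<omega>. (norm (g i \<tau> \<omega>))\<^sup>2)" using sqi_g[OF i t] by (simp add: sqi_def)
  have Ds: "integrable M (\<lambda>\<omega>. (norm (D i \<tau> \<omega>))\<^sup>2)" using sqi_D[OF i] t by (simp add: sqi_def)
  have Yn: "integrable M (\<lambda>\<omega>. (norm (Y \<omega>))\<^sup>2)" using Ys by (simp add: sqi_def)
  have ig: "integrable M (\<lambda>\<omega>. (Y \<omega> \<bullet> b) * (g i \<tau> \<omega> \<bullet> b))" if b: "b \<in> Basis" for b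
    by (rule P.sqi_prod_int[OF _ _ Yn gs]) (use YM gm b Basis_le_norm in auto)
  have iD: "integrable M (\<lambda>\<omega>. (Y \<omega> \<bullet> b) * (D i \<tau> \<omega> \<bullet> b))" if b: "b \<in> Basis" for b
    by (rule P.sqi_prod_int[OF _ _ Yn Ds]) (use YM Dm b Basis_le_norm in auto)
  have comp: "(\<integral>\<omega>. (Y \<omega> \<bullet> b) * (g i \<tau> \<omega> \<bullet> b) \<partial>M) = (\<integral>\<omega>. (Y \<omega> \<bullet> b) * (D i \<tau> \<omega> \<bullet> b) \<partial>M)"
    if b: "b \<in> Basis" for b
  proof -
    have Ybm: "(\<lambda>\<omega>. Y \<omega> \<bullet> b) \<in> borel_measurable (past M Wt X xi i \<tau>)" using Ym by measurable
    have gbm: "(\<lambda>\<omega>. g i \<tau> \<omega> \<bullet> b) \<in> borel_measurable M" using gm by measurable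
    have "(\<integral>\<omega>. (Y \<omega> \<bullet> b) * (g i \<tau> \<omega> \<bullet> b) \<partial>M)
        = (\<integral>\<omega>. (Y \<omega> \<bullet> b) * real_cond_exp M (past M Wt X xi i \<tau>) (\<lambda>\<omega>. g i \<tau> \<omega> \<bullet> b) \<omega> \<partial>M)"
      using S.real_cond_exp_intg(2)[OF ig[OF b] Ybm gbm] by simp
    also have "\<dots> = (\<integral>\<omega>. (Y \<omega> \<bullet> b) * (D i \<tau> \<omega> \<bullet> b) \<partial>M)"
    proof (rule integral_cong_AE)
      have "real_cond_exp M (past M Wt X xi i \<tau>) (\<lambda>\<omega>. g i \<tau> \<omega> \<bullet> b) \<in> borel_measurable M"
        by (rule borel_measurable_cond_exp2)
      then show "(\<lambda>\<omega>. (Y \<omega> \<bullet> b) * real_cond_exp M (past M Wt X xi i \<tau>) (\<lambda>\<omega>. g i \<tau> \<omega> \<bullet> b) \<omega>) \<in> borel_measurable M"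
        using YM by measurable
      show "(\<lambda>\<omega>. (Y \<omega> \<bullet> b) * (D i \<tau> \<omega> \<bullet> b)) \<in> borel_measurable M" using YM Dm by measurable
      show "AE \<omega> in M. (Y \<omega> \<bullet> b) * real_cond_exp M (past M Wt X xi i \<tau>) (\<lambda>\<omega>. g i \<tau> \<omega> \<bullet> b) \<omega>
               = (Y \<omega> \<bullet> b) * (D i \<tau> \<omega> \<bullet> b)"
        using A2_unbiased[OF i t, of b] by eventually_elim simp
    qed
    finally show ?thesis .
  qed
  have "(\<integral>\<omega>. Y \<omega> \<bullet> g i \<tau> \<omega> \<partial>M) = (\<integral>\<omega>. (\<Sum>b\<in>Basis. (Y \<omega> \<bullet> b) * (g i \<tau> \<omega> \<bullet> b)) \<partial>M)"
    by (subst euclidean_inner) simp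
  also have "\<dots> = (\<Sum>b\<in>Basis. \<integral>\<omega>. (Y \<omega> \<bullet> b) * (g i \<tau> \<omega> \<bullet> b) \<partial>M)"
    by (rule Bochner_Integration.integral_sum) (use ig in auto)
  also have "\<dots> = (\<Sum>b\<in>Basis. \<integral>\<omega>. (Y \<omega> \<bullet> b) * (D i \<tau> \<omega> \<bullet> b) \<partial>M)"
    using comp by simp
  also have "\<dots> = (\<integral>\<omega>. (\<Sum>b\<in>Basis. (Y \<omega> \<bullet> b) * (D i \<tau> \<omega> \<bullet> b)) \<partial>M)"
    by (rule Bochner_Integration.integral_sum[symmetric]) (use iD in auto)
  also have "\<dots> = (\<integral>\<omega>. Y \<omega> \<bullet> D i \<tau> \<omega> \<partial>M)"
    by (subst (2) euclidean_inner) simp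
  finally show ?thesis .
qed

lemma orth_nz:
  assumes i: "i \<in> {1..N}" and t: "\<tau> < K"
    and Ym: "Y \<in> borel_measurable (past M Wt X xi i \<tau>)" and Ys: "sqi M Y"
  shows "(\<integral>\<omega>. Y \<omega> \<bullet> nz i \<tau> \<omega> \<partial>M) = 0"
proof -
  have "(\<integral>\<omega>. Y \<omega> \<bullet> nz i \<tau> \<omega> \<partial>M) = (\<integral>\<omega>. Y \<omega> \<bullet> g i \<tau> \<omega> - Y \<omega> \<bullet> D i \<tau> \<omega> \<partial>M)"
    by (simp add: inner_diff_right)
  also have "\<dots> = (\<integral>\<omega>. Y \<omega> \<bullet> g i \<tau> \<omega> \<partial>M) - (\<integral>\<omega>. Y \<omega> \<bullet> D i \<tau> \<omega> \<partial>M)"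
    using P.sqi_inner_int[OF Ys sqi_g[OF i t]] P.sqi_inner_int[OF Ys sqi_D[OF i, of \<tau>]] t by simp
  finally show ?thesis using orth[OF assms] by simp
qed

lemma var_bound:
  assumes i: "i \<in> {1..N}" and t: "\<tau> < K"
  shows "(\<integral>\<omega>. (norm (nz i \<tau> \<omega>))\<^sup>2 \<partial>M) \<le> sigma_l\<^sup>2"
proof -
  interpret S: sigma_finite_subalgebra M "past M Wt X xi i \<tau>" using past_sub i t by simp
  have int: "integrable M (\<lambda>\<omega>. (norm (nz i \<tau> \<omega>))\<^sup>2)" using sqi_nz[OF i t] by (simp add: sqi_def)
  have "(\<integral>\<omega>. (norm (nz i \<tau> \<omega>))\<^sup>2 \<partial>M)
      = (\<integral>\<omega>. real_cond_exp M (past M Wt X xi i \<tau>) (\<lambda>\<omega>. (norm (nz i \<tau> \<omega>))\<^sup>2) \<omega> \<partial>M)"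
    using S.real_cond_exp_int(2)[OF int] by simp
  also have "\<dots> \<le> (\<integral>\<omega>. sigma_l\<^sup>2 \<partial>M)"
    by (rule integral_mono_AE[OF S.real_cond_exp_int(1)[OF int]]) (use A2_var[OF i t] in auto)
  also have "\<dots> = sigma_l\<^sup>2" by (simp add: P.prob_space)
  finally show ?thesis .
qed

lemma mart:
  assumes i: "i \<in> {1..N}"
  shows "\<tau> \<le> K \<Longrightarrow> (\<integral>\<omega>. (norm (\<Sum>s<\<tau>. nz i s \<omega>))\<^sup>2 \<partial>M) = (\<Sum>s<\<tau>. \<integral>\<omega>. (norm (nz i s \<omega>))\<^sup>2 \<partial>M)"
proof (induction \<tau>)
  case 0 then show ?case by simp
next
  case (Suc \<tau>)
  then have t: "\<tau> < K" by simp
  define A where "A = (\<lambda>\<omega>. \<Sum>s<\<tau>. nz i s \<omega>)"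
  have As: "sqi M A" unfolding A_def by (intro P.sqi_sum sqi_nz i) (use t in auto)
  have Am: "A \<in> borel_measurable (past M Wt X xi i \<tau>)"
    unfolding A_def using g_past[OF i] D_past[OF i] t
    by (intro borel_measurable_sum borel_measurable_diff) auto
  have eq: "(norm (A \<omega> + nz i \<tau> \<omega>))\<^sup>2 = (norm (A \<omega>))\<^sup>2 + 2 * (A \<omega> \<bullet> nz i \<tau> \<omega>) + (norm (nz i \<tau> \<omega>))\<^sup>2" for \<omega>
    by (simp add: power2_norm_eq_inner algebra_simps inner_commute)
  have "(\<integral>\<omega>. (norm (\<Sum>s<Suc \<tau>. nz i s \<omega>))\<^sup>2 \<partial>M) = (\<integral>\<omega>. (norm (A \<omega> + nz i \<tau> \<omega>))\<^sup>2 \<partial>M)"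
    by (simp add: A_def)
  also have "\<dots> = (\<integral>\<omega>. (norm (A \<omega>))\<^sup>2 + 2 * (A \<omega> \<bullet> nz i \<tau> \<omega>) + (norm (nz i \<tau> \<omega>))\<^sup>2 \<partial>M)"
    by (simp only: eq)
  also have "\<dots> = (\<integral>\<omega>. (norm (A \<omega>))\<^sup>2 \<partial>M) + 2 * (\<integral>\<omega>. A \<omega> \<bullet> nz i \<tau> \<omega> \<partial>M) + (\<integral>\<omega>. (norm (nz i \<tau> \<omega>))\<^sup>2 \<partial>M)"
    using As sqi_nz[OF i t] P.sqi_inner_int[OF As sqi_nz[OF i t]] by (simp add: sqi_def)
  also have "(\<integral>\<omega>. A \<omega> \<bullet> nz i \<tau> \<omega> \<partial>M) = 0" by (rule orth_nz[OF i t Am As])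
  finally show ?case using Suc by (simp add: A_def)
qed

end



context fl
begin

interpretation P: prob_space M by (rule prob)

abbreviation "G2 \<equiv> (\<integral>\<omega>. (norm (gf (Wt \<omega>)))\<^sup>2 \<partial>M)"
abbreviation "sp \<equiv> (\<Sum>i\<in>{1..N}. (p i)\<^sup>2)"

lemma sp_ge: "real N * sp \<ge> 1"
proof -
  have "(\<Sum>i\<in>{1..N}. 1 * p i)\<^sup>2 \<le> (\<Sum>i\<in>{1..N}. 1\<^sup>2) * (\<Sum>i\<in>{1..N}. (p i)\<^sup>2)"
    by (rule Cauchy_Schwarz_ineq_sum)
  then show ?thesis using p_sum by simp
qed

lemma LetaK_sq: "(L * eta * K)\<^sup>2 \<le> 1/18"
proof -
  have "9 * (L * eta * K)\<^sup>2 * (real N * sp) \<le> 1/2" using step1 C_pos by (simp add: power_mult_distrib algebra_simps)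
  moreover have "9 * (L * eta * K)\<^sup>2 \<le> 9 * (L * eta * K)\<^sup>2 * (real N * sp)"
    using sp_ge by (simp add: mult_le_cancel_left1)
  ultimately show ?thesis by simp
qed

lemma LetaK: "L * eta * K \<le> 1/4"
proof (rule ccontr)
  assume "\<not> L * eta * K \<le> 1/4"
  then have "1/4 < L * eta * K" by simp
  then have "(1/4)\<^sup>2 < (L * eta * K)\<^sup>2" by (rule power_strict_mono) auto
  moreover have "(1/4::real)\<^sup>2 = 1/16" by (simp add: power2_eq_square)
  ultimately show False using LetaK_sq by linarith
qed

lemma int_sq: "sqi M Y \<Longrightarrow> integrable M (\<lambda>\<omega>. (norm (Y \<omega>))\<^sup>2)"
  by (simp add: sqi_def)

lemma D_bound:
  assumes i: "i \<in> {1..N}" and s: "s \<le> K"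
  shows "(\<integral>\<omega>. (norm (D i s \<omega>))\<^sup>2 \<partial>M)
     \<le> 3 * L\<^sup>2 * (\<integral>\<omega>. (norm (W i s \<omega> - Wt \<omega>))\<^sup>2 \<partial>M) + 3 * sigma_g\<^sup>2 + 3 * G2"
proof -
  have pw: "(norm (D i s \<omega>))\<^sup>2 \<le> 3 * L\<^sup>2 * (norm (W i s \<omega> - Wt \<omega>))\<^sup>2 + 3 * sigma_g\<^sup>2 + 3 * (norm (gf (Wt \<omega>)))\<^sup>2" for \<omega>
  proof -
    have e: "D i s \<omega> = (D i s \<omega> - gF i (Wt \<omega>)) + (gF i (Wt \<omega>) - gf (Wt \<omega>)) + gf (Wt \<omega>)" by simp
    have a: "(norm (D i s \<omega> - gF i (Wt \<omega>)))\<^sup>2 \<le> L\<^sup>2 * (norm (W i s \<omega> - Wt \<omega>))\<^sup>2"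
      using power_mono[OF A1_F[OF i, of "W i s \<omega>" "Wt \<omega>"] norm_ge_zero, of 2] by (simp add: power_mult_distrib)
    have b: "(norm (gF i (Wt \<omega>) - gf (Wt \<omega>)))\<^sup>2 \<le> sigma_g\<^sup>2"
      using A3[OF i, of "Wt \<omega>"] by (simp add: norm_minus_commute)
    have "(norm (D i s \<omega>))\<^sup>2 \<le> 3 * (norm (D i s \<omega> - gF i (Wt \<omega>)))\<^sup>2 + 3 * (norm (gF i (Wt \<omega>) - gf (Wt \<omega>)))\<^sup>2 + 3 * (norm (gf (Wt \<omega>)))\<^sup>2"
      using sq_sum3[of "D i s \<omega> - gF i (Wt \<omega>)" "gF i (Wt \<omega>) - gf (Wt \<omega>)" "gf (Wt \<omega>)"]
      by (simp only: e[symmetric])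
    then show ?thesis using a b by linarith
  qed
  have "(\<integral>\<omega>. (norm (D i s \<omega>))\<^sup>2 \<partial>M)
     \<le> (\<integral>\<omega>. 3 * L\<^sup>2 * (norm (W i s \<omega> - Wt \<omega>))\<^sup>2 + 3 * sigma_g\<^sup>2 + 3 * (norm (gf (Wt \<omega>)))\<^sup>2 \<partial>M)"
    by (rule integral_mono[OF int_sq[OF sqi_D[OF i s]] _ pw])
       (use int_sq[OF sqi_Wdiff[OF i s]] int_sq[OF sqi_gfW] in auto)
  also have "\<dots> = 3 * L\<^sup>2 * (\<integral>\<omega>. (norm (W i s \<omega> - Wt \<omega>))\<^sup>2 \<partial>M) + 3 * sigma_g\<^sup>2 + 3 * G2"
    using int_sq[OF sqi_Wdiff[OF i s]] int_sq[OF sqi_gfW] by (simp add: P.prob_space)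
  finally show ?thesis .
qed

lemma Wd_bound:
  assumes i: "i \<in> {1..N}" and t: "\<tau> \<le> K"
  shows "(\<integral>\<omega>. (norm (W i \<tau> \<omega> - Wt \<omega>))\<^sup>2 \<partial>M)
     \<le> 2 * eta\<^sup>2 * \<tau> * sigma_l\<^sup>2 + 2 * eta\<^sup>2 * \<tau> * (\<Sum>s<\<tau>. \<integral>\<omega>. (norm (D i s \<omega>))\<^sup>2 \<partial>M)"
proof -
  have pw: "(norm (W i \<tau> \<omega> - Wt \<omega>))\<^sup>2 \<le> 2 * eta\<^sup>2 * (norm (\<Sum>s<\<tau>. nz i s \<omega>))\<^sup>2
      + 2 * eta\<^sup>2 * \<tau> * (\<Sum>s<\<tau>. (norm (D i s \<omega>))\<^sup>2)" for \<omega>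
  proof -
    have "W i \<tau> \<omega> - Wt \<omega> = - (eta *\<^sub>R ((\<Sum>s<\<tau>. nz i s \<omega>) + (\<Sum>s<\<tau>. D i s \<omega>)))"
      unfolding W_diff_eq by (simp add: sum.distrib[symmetric])
    then have "(norm (W i \<tau> \<omega> - Wt \<omega>))\<^sup>2 = eta\<^sup>2 * (norm ((\<Sum>s<\<tau>. nz i s \<omega>) + (\<Sum>s<\<tau>. D i s \<omega>)))\<^sup>2"
      by (simp add: power_mult_distrib)
    also have "\<dots> \<le> eta\<^sup>2 * (2 * (norm (\<Sum>s<\<tau>. nz i s \<omega>))\<^sup>2 + 2 * (norm (\<Sum>s<\<tau>. D i s \<omega>))\<^sup>2)"
      by (rule mult_left_mono[OF sq_sum2]) simp
    also have "\<dots> \<le> eta\<^sup>2 * (2 * (norm (\<Sum>s<\<tau>. nz i s \<omega>))\<^sup>2 + 2 * (\<tau> * (\<Sum>s<\<tau>. (norm (D i s \<omega>))\<^sup>2)))"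
      using norm_sum_sq_card[of "\<lambda>s. D i s \<omega>" "{..<\<tau>}"] by (intro mult_left_mono add_left_mono) auto
    finally show ?thesis by (simp add: algebra_simps)
  qed
  have sn: "sqi M (\<lambda>\<omega>. \<Sum>s<\<tau>. nz i s \<omega>)" by (intro P.sqi_sum sqi_nz i) (use t in auto)
  have sD: "integrable M (\<lambda>\<omega>. \<Sum>s<\<tau>. (norm (D i s \<omega>))\<^sup>2)"
    by (rule Bochner_Integration.integrable_sum, rule int_sq, rule sqi_D[OF i]) (use t in auto)
  have "(\<integral>\<omega>. (norm (W i \<tau> \<omega> - Wt \<omega>))\<^sup>2 \<partial>M)
     \<le> (\<integral>\<omega>. 2 * eta\<^sup>2 * (norm (\<Sum>s<\<tau>. nz i s \<omega>))\<^sup>2 + 2 * eta\<^sup>2 * \<tau> * (\<Sum>s<\<tau>. (norm (D i s \<omega>))\<^sup>2) \<partial>M)"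
    by (rule integral_mono[OF int_sq[OF sqi_Wdiff[OF i t]] _ pw]) (use int_sq[OF sn] sD in auto)
  also have "\<dots> = 2 * eta\<^sup>2 * (\<integral>\<omega>. (norm (\<Sum>s<\<tau>. nz i s \<omega>))\<^sup>2 \<partial>M)
       + 2 * eta\<^sup>2 * \<tau> * (\<Sum>s<\<tau>. \<integral>\<omega>. (norm (D i s \<omega>))\<^sup>2 \<partial>M)"
    using int_sq[OF sn] sD int_sq[OF sqi_D[OF i]] t
    by (simp add: Bochner_Integration.integral_sum)
  finally have h1: "(\<integral>\<omega>. (norm (W i \<tau> \<omega> - Wt \<omega>))\<^sup>2 \<partial>M) \<le> 2 * eta\<^sup>2 * (\<integral>\<omega>. (norm (\<Sum>s<\<tau>. nz i s \<omega>))\<^sup>2 \<partial>M)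
       + 2 * eta\<^sup>2 * \<tau> * (\<Sum>s<\<tau>. \<integral>\<omega>. (norm (D i s \<omega>))\<^sup>2 \<partial>M)" .
  have h2: "(\<integral>\<omega>. (norm (\<Sum>s<\<tau>. nz i s \<omega>))\<^sup>2 \<partial>M) \<le> \<tau> * sigma_l\<^sup>2"
  proof -
    have "(\<integral>\<omega>. (norm (\<Sum>s<\<tau>. nz i s \<omega>))\<^sup>2 \<partial>M) = (\<Sum>s<\<tau>. \<integral>\<omega>. (norm (nz i s \<omega>))\<^sup>2 \<partial>M)"
      by (rule mart[OF i t])
    also have "\<dots> \<le> (\<Sum>s<\<tau>. sigma_l\<^sup>2)"
      by (rule sum_mono) (use var_bound[OF i] t in auto)
    finally show ?thesis by simp
  qed
  have "2 * eta\<^sup>2 * (\<integral>\<omega>. (norm (\<Sum>s<\<tau>. nz i s \<omega>))\<^sup>2 \<partial>M) \<le> 2 * eta\<^sup>2 * (\<tau> * sigma_l\<^sup>2)"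
    by (rule mult_left_mono[OF h2]) simp
  with h1 show ?thesis by (simp add: algebra_simps)
qed

lemma drift:
  assumes i: "i \<in> {1..N}"
  shows "(\<Sum>\<tau><K. \<integral>\<omega>. (norm (W i \<tau> \<omega> - Wt \<omega>))\<^sup>2 \<partial>M)
     \<le> 3 * eta\<^sup>2 * K\<^sup>2 * (sigma_l\<^sup>2 + 6 * K * sigma_g\<^sup>2 + 6 * K * G2)"
proof -
  define d where "d \<tau> = (\<integral>\<omega>. (norm (W i \<tau> \<omega> - Wt \<omega>))\<^sup>2 \<partial>M)" for \<tau>
  define e where "e s = (\<integral>\<omega>. (norm (D i s \<omega>))\<^sup>2 \<partial>M)" for s
  define S where "S = (\<Sum>\<tau><K. d \<tau>)"
  define E where "E = (\<Sum>s<K. e s)"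
  have e_nn: "e s \<ge> 0" for s unfolding e_def by simp
  have S_nn: "S \<ge> 0" unfolding S_def d_def by (simp add: sum_nonneg)
  have G2_nn: "G2 \<ge> 0" by simp
  have sg_nn: "sigma_g\<^sup>2 \<ge> 0" by simp
  have eS: "E \<le> 3 * L\<^sup>2 * S + K * (3 * sigma_g\<^sup>2 + 3 * G2)"
  proof -
    have "E \<le> (\<Sum>s<K. 3 * L\<^sup>2 * d s + 3 * sigma_g\<^sup>2 + 3 * G2)"
      unfolding E_def e_def d_def by (rule sum_mono) (use D_bound[OF i] in auto)
    also have "\<dots> = 3 * L\<^sup>2 * S + K * (3 * sigma_g\<^sup>2 + 3 * G2)"
      by (simp add: S_def sum.distrib sum_distrib_left[symmetric] distrib_left)
    finally show ?thesis .
  qed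
  have dt: "d \<tau> \<le> 2 * eta\<^sup>2 * K * sigma_l\<^sup>2 + 2 * eta\<^sup>2 * K * E" if t: "\<tau> < K" for \<tau>
  proof -
    have "d \<tau> \<le> 2 * eta\<^sup>2 * \<tau> * sigma_l\<^sup>2 + 2 * eta\<^sup>2 * \<tau> * (\<Sum>s<\<tau>. e s)"
      unfolding d_def e_def using Wd_bound[OF i] t by simp
    moreover have "(\<Sum>s<\<tau>. e s) \<le> E"
      unfolding E_def by (rule sum_mono2) (use t e_nn in auto)
    moreover have "(\<Sum>s<\<tau>. e s) \<ge> 0" by (simp add: e_nn sum_nonneg)
    moreover have "real \<tau> \<le> K" using t by simp
    ultimately have "d \<tau> \<le> 2 * eta\<^sup>2 * K * sigma_l\<^sup>2 + 2 * eta\<^sup>2 * \<tau> * E"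
      by (smt (verit) mult_left_mono mult_right_mono zero_le_power2 of_nat_0_le_iff mult_nonneg_nonneg)
    moreover have "2 * eta\<^sup>2 * \<tau> * E \<le> 2 * eta\<^sup>2 * K * E"
      using \<open>real \<tau> \<le> K\<close> E_def e_nn
      by (intro mult_right_mono mult_left_mono) (auto simp: sum_nonneg)
    ultimately show ?thesis by linarith
  qed
  have "S \<le> (\<Sum>\<tau><K. 2 * eta\<^sup>2 * K * sigma_l\<^sup>2 + 2 * eta\<^sup>2 * K * E)"
    unfolding S_def by (rule sum_mono) (use dt in auto)
  also have "\<dots> = K * (2 * eta\<^sup>2 * K * sigma_l\<^sup>2 + 2 * eta\<^sup>2 * K * E)" by simp
  also have "\<dots> \<le> K * (2 * eta\<^sup>2 * K * sigma_l\<^sup>2 + 2 * eta\<^sup>2 * K * (3 * L\<^sup>2 * S + K * (3 * sigma_g\<^sup>2 + 3 * G2)))"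
    using eS by (intro mult_left_mono add_left_mono) auto
  also have "\<dots> = 2 * (eta\<^sup>2 * K\<^sup>2) * sigma_l\<^sup>2 + 6 * ((L * eta * K)\<^sup>2 * S) + 6 * (eta\<^sup>2 * K\<^sup>2) * K * (sigma_g\<^sup>2 + G2)"
    by (simp add: algebra_simps power2_eq_square)
  finally have S1: "S \<le> 2 * (eta\<^sup>2 * K\<^sup>2) * sigma_l\<^sup>2 + 6 * ((L * eta * K)\<^sup>2 * S) + 6 * (eta\<^sup>2 * K\<^sup>2) * K * (sigma_g\<^sup>2 + G2)" .
  have "(L * eta * K)\<^sup>2 * S \<le> 1/18 * S" by (rule mult_right_mono[OF LetaK_sq S_nn])
  with S1 have S2: "S \<le> 3 * (eta\<^sup>2 * K\<^sup>2) * sigma_l\<^sup>2 + 9 * (eta\<^sup>2 * K\<^sup>2) * K * (sigma_g\<^sup>2 + G2)" by linarith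
  have "9 * (eta\<^sup>2 * K\<^sup>2) * K * (sigma_g\<^sup>2 + G2) \<le> 18 * (eta\<^sup>2 * K\<^sup>2) * K * (sigma_g\<^sup>2 + G2)"
    using G2_nn sg_nn by (intro mult_right_mono) auto
  with S2 have "S \<le> 3 * (eta\<^sup>2 * K\<^sup>2) * sigma_l\<^sup>2 + 18 * (eta\<^sup>2 * K\<^sup>2) * K * (sigma_g\<^sup>2 + G2)" by linarith
  then show ?thesis unfolding S_def d_def by (simp add: algebra_simps)
qed

end



context fl
begin

interpretation P: prob_space M by (rule prob)

lemma grad_sum: "gf w = (\<Sum>i\<in>{1..N}. p i *\<^sub>R gF i w)"
proof -
  have fe: "f = (\<lambda>W. \<Sum>i\<in>{1..N}. p i * F i W)" using f_def by (rule ext)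
  have "(f has_derivative (\<lambda>h. \<Sum>i\<in>{1..N}. p i * (gF i w \<bullet> h))) (at w)"
    unfolding fe by (intro has_derivative_sum has_derivative_mult_right F_grad) auto
  from has_derivative_unique[OF f_grad this]
  have e: "\<And>h. gf w \<bullet> h = (\<Sum>i\<in>{1..N}. p i * (gF i w \<bullet> h))" by metis
  define v where "v = (\<Sum>i\<in>{1..N}. p i *\<^sub>R gF i w)"
  have "\<And>h. gf w \<bullet> h = v \<bullet> h" unfolding e v_def by (simp add: inner_sum_left)
  then have "(gf w - v) \<bullet> (gf w - v) = 0" by (simp add: inner_diff_left)
  then show ?thesis unfolding v_def by simp
qed

definition "Dl \<omega> = (\<Sum>i\<in>{1..N}. p i *\<^sub>R (\<Sum>\<tau><K. g i \<tau> \<omega>))"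
definition "bb \<tau> \<omega> = (\<Sum>i\<in>{1..N}. p i *\<^sub>R D i \<tau> \<omega>)"
definition "AA \<omega> = (\<Sum>i\<in>{1..N}. p i *\<^sub>R (\<Sum>\<tau><K. nz i \<tau> \<omega>))"
definition "BB \<omega> = (\<Sum>\<tau><K. bb \<tau> \<omega>)"

lemma V_eq: "V_next G eta Wt xi p N K \<omega> = Wt \<omega> - eta *\<^sub>R Dl \<omega>"
proof -
  have "V_next G eta Wt xi p N K \<omega> = (\<Sum>i\<in>{1..N}. p i *\<^sub>R Wt \<omega>) - (\<Sum>i\<in>{1..N}. p i *\<^sub>R (eta *\<^sub>R (\<Sum>\<tau><K. g i \<tau> \<omega>)))"
    unfolding V_next_def by (simp add: scaleR_diff_right sum_subtractf)
  also have "(\<Sum>i\<in>{1..N}. p i *\<^sub>R Wt \<omega>) = Wt \<omega>" using p_sum by (simp add: scaleR_sum_left[symmetric])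
  also have "(\<Sum>i\<in>{1..N}. p i *\<^sub>R (eta *\<^sub>R (\<Sum>\<tau><K. g i \<tau> \<omega>))) = eta *\<^sub>R Dl \<omega>"
    unfolding Dl_def by (simp add: scaleR_sum_right mult.commute)
  finally show ?thesis .
qed

lemma Dl_eq: "Dl \<omega> = AA \<omega> + BB \<omega>"
proof -
  have "Dl \<omega> = (\<Sum>i\<in>{1..N}. p i *\<^sub>R (\<Sum>\<tau><K. nz i \<tau> \<omega>) + p i *\<^sub>R (\<Sum>\<tau><K. D i \<tau> \<omega>))"
    unfolding Dl_def by (intro sum.cong refl) (simp add: sum.distrib[symmetric] scaleR_add_right[symmetric])
  also have "\<dots> = AA \<omega> + (\<Sum>i\<in>{1..N}. \<Sum>\<tau><K. p i *\<^sub>R D i \<tau> \<omega>)"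
    unfolding AA_def by (simp add: sum.distrib scaleR_sum_right)
  also have "(\<Sum>i\<in>{1..N}. \<Sum>\<tau><K. p i *\<^sub>R D i \<tau> \<omega>) = BB \<omega>"
    unfolding BB_def bb_def by (rule sum.swap)
  finally show ?thesis .
qed

lemma sqi_bb: "\<tau> \<le> K \<Longrightarrow> sqi M (bb \<tau>)"
  unfolding bb_def by (intro P.sqi_sum P.sqi_scaleR sqi_D) auto

lemma sqi_BB: "sqi M BB"
  unfolding BB_def by (intro P.sqi_sum sqi_bb) auto

lemma sqi_AA: "sqi M AA"
  unfolding AA_def by (intro P.sqi_sum P.sqi_scaleR sqi_nz) auto

lemma sqi_Dl: "sqi M Dl"
proof -
  have "Dl = (\<lambda>\<omega>. AA \<omega> + BB \<omega>)" using Dl_eq by (rule ext)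
  then show ?thesis using P.sqi_add[OF sqi_AA sqi_BB] by simp
qed

lemma pw_descent:
  shows "f (V_next G eta Wt xi p N K \<omega>) \<le> f (Wt \<omega>) - eta * (gf (Wt \<omega>) \<bullet> Dl \<omega>) + L * eta\<^sup>2 / 2 * (norm (Dl \<omega>))\<^sup>2"
    and "f (V_next G eta Wt xi p N K \<omega>) \<ge> f (Wt \<omega>) - eta * (gf (Wt \<omega>) \<bullet> Dl \<omega>) - L * eta\<^sup>2 / 2 * (norm (Dl \<omega>))\<^sup>2"
proof -
  have h: "Wt \<omega> - eta *\<^sub>R Dl \<omega> - Wt \<omega> = - (eta *\<^sub>R Dl \<omega>)" by simp
  have i1: "gf (Wt \<omega>) \<bullet> (- (eta *\<^sub>R Dl \<omega>)) = - (eta * (gf (Wt \<omega>) \<bullet> Dl \<omega>))" by simp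
  have n1: "L / 2 * (norm (- (eta *\<^sub>R Dl \<omega>)))\<^sup>2 = L * eta\<^sup>2 / 2 * (norm (Dl \<omega>))\<^sup>2"
    by (simp add: power_mult_distrib)
  note d = descent[OF f_grad A1_f, where x="Wt \<omega>" and y="Wt \<omega> - eta *\<^sub>R Dl \<omega>"]
  show "f (V_next G eta Wt xi p N K \<omega>) \<le> f (Wt \<omega>) - eta * (gf (Wt \<omega>) \<bullet> Dl \<omega>) + L * eta\<^sup>2 / 2 * (norm (Dl \<omega>))\<^sup>2"
    using d(1) unfolding h i1 n1 V_eq by linarith
  show "f (V_next G eta Wt xi p N K \<omega>) \<ge> f (Wt \<omega>) - eta * (gf (Wt \<omega>) \<bullet> Dl \<omega>) - L * eta\<^sup>2 / 2 * (norm (Dl \<omega>))\<^sup>2"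
    using d(2) unfolding h i1 n1 V_eq by linarith
qed

lemma fV_int: "integrable M (\<lambda>\<omega>. f (V_next G eta Wt xi p N K \<omega>))"
proof (rule Bochner_Integration.integrable_bound[where f="\<lambda>\<omega>. \<bar>f (Wt \<omega>)\<bar> + eta * \<bar>gf (Wt \<omega>) \<bullet> Dl \<omega>\<bar> + L * eta\<^sup>2 / 2 * (norm (Dl \<omega>))\<^sup>2"])
  show "integrable M (\<lambda>\<omega>. \<bar>f (Wt \<omega>)\<bar> + eta * \<bar>gf (Wt \<omega>) \<bullet> Dl \<omega>\<bar> + L * eta\<^sup>2 / 2 * (norm (Dl \<omega>))\<^sup>2)"
    using int_f P.sqi_inner_int[OF sqi_gfW sqi_Dl] int_sq[OF sqi_Dl] by auto
  have "Dl \<in> borel_measurable M" using sqi_Dl by (simp add: sqi_def)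
  then have "(\<lambda>\<omega>. V_next G eta Wt xi p N K \<omega>) \<in> borel_measurable M"
    unfolding V_eq using Wt_meas by measurable
  then show "(\<lambda>\<omega>. f (V_next G eta Wt xi p N K \<omega>)) \<in> borel_measurable M"
    using measurable_compose f_meas by blast
  show "AE \<omega> in M. norm (f (V_next G eta Wt xi p N K \<omega>)) \<le> norm (\<bar>f (Wt \<omega>)\<bar> + eta * \<bar>gf (Wt \<omega>) \<bullet> Dl \<omega>\<bar> + L * eta\<^sup>2 / 2 * (norm (Dl \<omega>))\<^sup>2)"
  proof (rule AE_I2)
    fix \<omega>
    have e: "eta * \<bar>gf (Wt \<omega>) \<bullet> Dl \<omega>\<bar> = \<bar>eta * (gf (Wt \<omega>) \<bullet> Dl \<omega>)\<bar>" using eta_nonneg by (simp add: abs_mult)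
    have n: "L * eta\<^sup>2 / 2 * (norm (Dl \<omega>))\<^sup>2 \<ge> 0" using L_nonneg by simp
    show "norm (f (V_next G eta Wt xi p N K \<omega>)) \<le> norm (\<bar>f (Wt \<omega>)\<bar> + eta * \<bar>gf (Wt \<omega>) \<bullet> Dl \<omega>\<bar> + L * eta\<^sup>2 / 2 * (norm (Dl \<omega>))\<^sup>2)"
      using pw_descent[of \<omega>] e n by (simp only: real_norm_def)
  qed
qed

lemma step_A: "(\<integral>\<omega>. f (V_next G eta Wt xi p N K \<omega>) \<partial>M)
   \<le> (\<integral>\<omega>. f (Wt \<omega>) \<partial>M) - eta * (\<integral>\<omega>. gf (Wt \<omega>) \<bullet> Dl \<omega> \<partial>M) + L * eta\<^sup>2 / 2 * (\<integral>\<omega>. (norm (Dl \<omega>))\<^sup>2 \<partial>M)"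
proof -
  have "(\<integral>\<omega>. f (V_next G eta Wt xi p N K \<omega>) \<partial>M)
     \<le> (\<integral>\<omega>. f (Wt \<omega>) - eta * (gf (Wt \<omega>) \<bullet> Dl \<omega>) + L * eta\<^sup>2 / 2 * (norm (Dl \<omega>))\<^sup>2 \<partial>M)"
    by (rule integral_mono[OF fV_int _ pw_descent(1)])
       (use int_f P.sqi_inner_int[OF sqi_gfW sqi_Dl] int_sq[OF sqi_Dl] in auto)
  also have "\<dots> = (\<integral>\<omega>. f (Wt \<omega>) \<partial>M) - eta * (\<integral>\<omega>. gf (Wt \<omega>) \<bullet> Dl \<omega> \<partial>M) + L * eta\<^sup>2 / 2 * (\<integral>\<omega>. (norm (Dl \<omega>))\<^sup>2 \<partial>M)"
    using int_f P.sqi_inner_int[OF sqi_gfW sqi_Dl] int_sq[OF sqi_Dl] by simp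
  finally show ?thesis .
qed

lemma gfW_past: "i \<in> {1..N} \<Longrightarrow> \<tau> \<le> K \<Longrightarrow> (\<lambda>\<omega>. gf (Wt \<omega>)) \<in> borel_measurable (past M Wt X xi i \<tau>)"
  using measurable_compose[OF Wt_past gf_meas] by simp

lemma step_B: "(\<integral>\<omega>. gf (Wt \<omega>) \<bullet> Dl \<omega> \<partial>M) = (\<Sum>\<tau><K. \<integral>\<omega>. gf (Wt \<omega>) \<bullet> bb \<tau> \<omega> \<partial>M)"
proof -
  have ig: "integrable M (\<lambda>\<omega>. gf (Wt \<omega>) \<bullet> g i \<tau> \<omega>)" if "i \<in> {1..N}" "\<tau> < K" for i \<tau>
    using P.sqi_inner_int[OF sqi_gfW sqi_g[OF that]] .
  have iD: "integrable M (\<lambda>\<omega>. gf (Wt \<omega>) \<bullet> D i \<tau> \<omega>)" if "i \<in> {1..N}" "\<tau> < K" for i \<tau>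
    using P.sqi_inner_int[OF sqi_gfW sqi_D[OF that(1)]] that(2) by simp
  have "(\<integral>\<omega>. gf (Wt \<omega>) \<bullet> Dl \<omega> \<partial>M) = (\<integral>\<omega>. (\<Sum>i\<in>{1..N}. p i * (\<Sum>\<tau><K. gf (Wt \<omega>) \<bullet> g i \<tau> \<omega>)) \<partial>M)"
    unfolding Dl_def by (simp add: inner_sum_right)
  also have "\<dots> = (\<Sum>i\<in>{1..N}. \<integral>\<omega>. p i * (\<Sum>\<tau><K. gf (Wt \<omega>) \<bullet> g i \<tau> \<omega>) \<partial>M)"
    by (rule Bochner_Integration.integral_sum)
       (auto intro!: integrable_mult_right Bochner_Integration.integrable_sum ig)
  also have "\<dots> = (\<Sum>i\<in>{1..N}. p i * (\<integral>\<omega>. (\<Sum>\<tau><K. gf (Wt \<omega>) \<bullet> g i \<tau> \<omega>) \<partial>M))"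
    by simp
  also have "\<dots> = (\<Sum>i\<in>{1..N}. p i * (\<Sum>\<tau><K. \<integral>\<omega>. gf (Wt \<omega>) \<bullet> g i \<tau> \<omega> \<partial>M))"
    by (intro sum.cong refl arg_cong2[where f="(*)"] Bochner_Integration.integral_sum ig) auto
  also have "\<dots> = (\<Sum>i\<in>{1..N}. p i * (\<Sum>\<tau><K. \<integral>\<omega>. gf (Wt \<omega>) \<bullet> D i \<tau> \<omega> \<partial>M))"
    by (intro sum.cong refl arg_cong2[where f="(*)"] orth gfW_past sqi_gfW) auto
  also have "\<dots> = (\<Sum>\<tau><K. \<Sum>i\<in>{1..N}. p i * (\<integral>\<omega>. gf (Wt \<omega>) \<bullet> D i \<tau> \<omega> \<partial>M))"
    by (simp add: sum_distrib_left, rule sum.swap)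
  also have "\<dots> = (\<Sum>\<tau><K. \<integral>\<omega>. gf (Wt \<omega>) \<bullet> bb \<tau> \<omega> \<partial>M)"
  proof (intro sum.cong refl)
    fix \<tau> assume t: "\<tau> \<in> {..<K}"
    have "(\<integral>\<omega>. gf (Wt \<omega>) \<bullet> bb \<tau> \<omega> \<partial>M) = (\<integral>\<omega>. (\<Sum>i\<in>{1..N}. p i * (gf (Wt \<omega>) \<bullet> D i \<tau> \<omega>)) \<partial>M)"
      unfolding bb_def by (simp add: inner_sum_right)
    also have "\<dots> = (\<Sum>i\<in>{1..N}. \<integral>\<omega>. p i * (gf (Wt \<omega>) \<bullet> D i \<tau> \<omega>) \<partial>M)"
      by (rule Bochner_Integration.integral_sum) (use iD t in auto)
    finally show "(\<Sum>i\<in>{1..N}. p i * (\<integral>\<omega>. gf (Wt \<omega>) \<bullet> D i \<tau> \<omega> \<partial>M)) = (\<integral>\<omega>. gf (Wt \<omega>) \<bullet> bb \<tau> \<omega> \<partial>M)"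
      by simp
  qed
  finally show ?thesis .
qed

lemma step_C: "\<tau> \<le> K \<Longrightarrow> - eta * (\<integral>\<omega>. gf (Wt \<omega>) \<bullet> bb \<tau> \<omega> \<partial>M)
   = eta / 2 * ((\<integral>\<omega>. (norm (gf (Wt \<omega>) - bb \<tau> \<omega>))\<^sup>2 \<partial>M) - G2 - (\<integral>\<omega>. (norm (bb \<tau> \<omega>))\<^sup>2 \<partial>M))"
proof -
  assume t: "\<tau> \<le> K"
  have "- (\<integral>\<omega>. gf (Wt \<omega>) \<bullet> bb \<tau> \<omega> \<partial>M) = (\<integral>\<omega>. - (gf (Wt \<omega>) \<bullet> bb \<tau> \<omega>) \<partial>M)"
    by simp
  also have "\<dots> = (\<integral>\<omega>. ((norm (gf (Wt \<omega>) - bb \<tau> \<omega>))\<^sup>2 - (norm (gf (Wt \<omega>)))\<^sup>2 - (norm (bb \<tau> \<omega>))\<^sup>2) / 2 \<partial>M)"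
    by (simp only: polar_ineq)
  also have "\<dots> = ((\<integral>\<omega>. (norm (gf (Wt \<omega>) - bb \<tau> \<omega>))\<^sup>2 \<partial>M) - G2 - (\<integral>\<omega>. (norm (bb \<tau> \<omega>))\<^sup>2 \<partial>M)) / 2"
    using int_sq[OF P.sqi_diff[OF sqi_gfW sqi_bb[OF t]]] int_sq[OF sqi_gfW] int_sq[OF sqi_bb[OF t]] by simp
  finally have h: "- (\<integral>\<omega>. gf (Wt \<omega>) \<bullet> bb \<tau> \<omega> \<partial>M) = ((\<integral>\<omega>. (norm (gf (Wt \<omega>) - bb \<tau> \<omega>))\<^sup>2 \<partial>M) - G2 - (\<integral>\<omega>. (norm (bb \<tau> \<omega>))\<^sup>2 \<partial>M)) / 2" .
  have "- eta * (\<integral>\<omega>. gf (Wt \<omega>) \<bullet> bb \<tau> \<omega> \<partial>M) = eta * (- (\<integral>\<omega>. gf (Wt \<omega>) \<bullet> bb \<tau> \<omega> \<partial>M))" by simp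
  also have "\<dots> = eta * (((\<integral>\<omega>. (norm (gf (Wt \<omega>) - bb \<tau> \<omega>))\<^sup>2 \<partial>M) - G2 - (\<integral>\<omega>. (norm (bb \<tau> \<omega>))\<^sup>2 \<partial>M)) / 2)"
    by (simp only: h)
  finally show ?thesis by simp
qed

lemma step_D: "(\<Sum>\<tau><K. \<integral>\<omega>. (norm (gf (Wt \<omega>) - bb \<tau> \<omega>))\<^sup>2 \<partial>M)
   \<le> sp * L\<^sup>2 * (\<Sum>i\<in>{1..N}. \<Sum>\<tau><K. \<integral>\<omega>. (norm (W i \<tau> \<omega> - Wt \<omega>))\<^sup>2 \<partial>M)"
proof -
  have one: "(\<integral>\<omega>. (norm (gf (Wt \<omega>) - bb \<tau> \<omega>))\<^sup>2 \<partial>M) \<le> sp * L\<^sup>2 * (\<Sum>i\<in>{1..N}. \<integral>\<omega>. (norm (W i \<tau> \<omega> - Wt \<omega>))\<^sup>2 \<partial>M)"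
    if t: "\<tau> < K" for \<tau>
  proof -
    have pw: "(norm (gf (Wt \<omega>) - bb \<tau> \<omega>))\<^sup>2 \<le> sp * L\<^sup>2 * (\<Sum>i\<in>{1..N}. (norm (W i \<tau> \<omega> - Wt \<omega>))\<^sup>2)" for \<omega>
    proof -
      have "gf (Wt \<omega>) - bb \<tau> \<omega> = (\<Sum>i\<in>{1..N}. p i *\<^sub>R (gF i (Wt \<omega>) - D i \<tau> \<omega>))"
        unfolding bb_def grad_sum[of "Wt \<omega>"] by (simp add: scaleR_diff_right sum_subtractf)
      then have "(norm (gf (Wt \<omega>) - bb \<tau> \<omega>))\<^sup>2 \<le> sp * (\<Sum>i\<in>{1..N}. (norm (gF i (Wt \<omega>) - D i \<tau> \<omega>))\<^sup>2)"
        using norm_sum_sq_weighted[of p "\<lambda>i. gF i (Wt \<omega>) - D i \<tau> \<omega>" "{1..N}"] by simp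
      also have "\<dots> \<le> sp * (\<Sum>i\<in>{1..N}. L\<^sup>2 * (norm (W i \<tau> \<omega> - Wt \<omega>))\<^sup>2)"
      proof (intro mult_left_mono sum_mono)
        fix i assume i: "i \<in> {1..N}"
        have "norm (gF i (Wt \<omega>) - D i \<tau> \<omega>) \<le> L * norm (W i \<tau> \<omega> - Wt \<omega>)"
          using A1_F[OF i, of "W i \<tau> \<omega>" "Wt \<omega>"] by (simp add: norm_minus_commute)
        from power_mono[OF this norm_ge_zero, of 2]
        show "(norm (gF i (Wt \<omega>) - D i \<tau> \<omega>))\<^sup>2 \<le> L\<^sup>2 * (norm (W i \<tau> \<omega> - Wt \<omega>))\<^sup>2"
          by (simp add: power_mult_distrib)
      qed (simp add: sum_nonneg)
      finally show ?thesis by (simp add: sum_distrib_left mult.assoc)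
    qed
    have iW: "\<And>i. i \<in> {1..N} \<Longrightarrow> integrable M (\<lambda>\<omega>. (norm (W i \<tau> \<omega> - Wt \<omega>))\<^sup>2)"
      using int_sq[OF sqi_Wdiff] t by simp
    have "(\<integral>\<omega>. (norm (gf (Wt \<omega>) - bb \<tau> \<omega>))\<^sup>2 \<partial>M) \<le> (\<integral>\<omega>. sp * L\<^sup>2 * (\<Sum>i\<in>{1..N}. (norm (W i \<tau> \<omega> - Wt \<omega>))\<^sup>2) \<partial>M)"
      by (rule integral_mono[OF int_sq[OF P.sqi_diff[OF sqi_gfW sqi_bb]] _ pw])
         (use t iW in \<open>auto intro!: integrable_mult_right Bochner_Integration.integrable_sum\<close>)
    also have "\<dots> = sp * L\<^sup>2 * (\<Sum>i\<in>{1..N}. \<integral>\<omega>. (norm (W i \<tau> \<omega> - Wt \<omega>))\<^sup>2 \<partial>M)"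
      using iW by (simp add: Bochner_Integration.integral_sum)
    finally show ?thesis .
  qed
  have "(\<Sum>\<tau><K. \<integral>\<omega>. (norm (gf (Wt \<omega>) - bb \<tau> \<omega>))\<^sup>2 \<partial>M)
     \<le> (\<Sum>\<tau><K. sp * L\<^sup>2 * (\<Sum>i\<in>{1..N}. \<integral>\<omega>. (norm (W i \<tau> \<omega> - Wt \<omega>))\<^sup>2 \<partial>M))"
    by (rule sum_mono) (use one in auto)
  also have "\<dots> = sp * L\<^sup>2 * (\<Sum>i\<in>{1..N}. \<Sum>\<tau><K. \<integral>\<omega>. (norm (W i \<tau> \<omega> - Wt \<omega>))\<^sup>2 \<partial>M)"
    by (simp add: sum_distrib_left[symmetric] sum.swap[where A="{..<K}"])
  finally show ?thesis .
qed

lemma step_F: "(\<integral>\<omega>. (norm (AA \<omega>))\<^sup>2 \<partial>M) \<le> sp * N * K * sigma_l\<^sup>2"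
proof -
  have pw: "(norm (AA \<omega>))\<^sup>2 \<le> sp * (\<Sum>i\<in>{1..N}. (norm (\<Sum>\<tau><K. nz i \<tau> \<omega>))\<^sup>2)" for \<omega>
    unfolding AA_def by (rule norm_sum_sq_weighted)
  have sn: "\<And>i. i \<in> {1..N} \<Longrightarrow> sqi M (\<lambda>\<omega>. \<Sum>\<tau><K. nz i \<tau> \<omega>)"
    by (intro P.sqi_sum sqi_nz) auto
  have "(\<integral>\<omega>. (norm (AA \<omega>))\<^sup>2 \<partial>M) \<le> (\<integral>\<omega>. sp * (\<Sum>i\<in>{1..N}. (norm (\<Sum>\<tau><K. nz i \<tau> \<omega>))\<^sup>2) \<partial>M)"
    by (rule integral_mono[OF int_sq[OF sqi_AA] _ pw])
       (use sn in \<open>auto intro!: integrable_mult_right Bochner_Integration.integrable_sum int_sq\<close>)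
  also have "\<dots> = sp * (\<Sum>i\<in>{1..N}. \<integral>\<omega>. (norm (\<Sum>\<tau><K. nz i \<tau> \<omega>))\<^sup>2 \<partial>M)"
    using sn by (simp add: Bochner_Integration.integral_sum int_sq)
  also have "\<dots> \<le> sp * (\<Sum>i\<in>{1..N}. K * sigma_l\<^sup>2)"
  proof (intro mult_left_mono sum_mono)
    fix i assume i: "i \<in> {1..N}"
    have "(\<integral>\<omega>. (norm (\<Sum>\<tau><K. nz i \<tau> \<omega>))\<^sup>2 \<partial>M) = (\<Sum>\<tau><K. \<integral>\<omega>. (norm (nz i \<tau> \<omega>))\<^sup>2 \<partial>M)"
      by (rule mart[OF i]) simp
    also have "\<dots> \<le> (\<Sum>\<tau><K. sigma_l\<^sup>2)" by (rule sum_mono) (use var_bound[OF i] in auto)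
    finally show "(\<integral>\<omega>. (norm (\<Sum>\<tau><K. nz i \<tau> \<omega>))\<^sup>2 \<partial>M) \<le> K * sigma_l\<^sup>2" by simp
  qed (simp add: sum_nonneg)
  finally show ?thesis by simp
qed

lemma step_G: "(\<integral>\<omega>. (norm (BB \<omega>))\<^sup>2 \<partial>M) \<le> K * (\<Sum>\<tau><K. \<integral>\<omega>. (norm (bb \<tau> \<omega>))\<^sup>2 \<partial>M)"
proof -
  have pw: "(norm (BB \<omega>))\<^sup>2 \<le> K * (\<Sum>\<tau><K. (norm (bb \<tau> \<omega>))\<^sup>2)" for \<omega>
    unfolding BB_def using norm_sum_sq_card[of "\<lambda>\<tau>. bb \<tau> \<omega>" "{..<K}"] by simp
  have ib: "\<And>\<tau>. \<tau> \<in> {..<K} \<Longrightarrow> integrable M (\<lambda>\<omega>. (norm (bb \<tau> \<omega>))\<^sup>2)"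
    using int_sq[OF sqi_bb] by simp
  have "(\<integral>\<omega>. (norm (BB \<omega>))\<^sup>2 \<partial>M) \<le> (\<integral>\<omega>. K * (\<Sum>\<tau><K. (norm (bb \<tau> \<omega>))\<^sup>2) \<partial>M)"
    by (rule integral_mono[OF int_sq[OF sqi_BB] _ pw])
       (use ib in \<open>auto intro!: integrable_mult_right Bochner_Integration.integrable_sum\<close>)
  also have "\<dots> = K * (\<Sum>\<tau><K. \<integral>\<omega>. (norm (bb \<tau> \<omega>))\<^sup>2 \<partial>M)"
    using ib by (simp add: Bochner_Integration.integral_sum)
  finally show ?thesis .
qed

lemma step_E: "(\<integral>\<omega>. (norm (Dl \<omega>))\<^sup>2 \<partial>M) \<le> K * (\<integral>\<omega>. (norm (AA \<omega>))\<^sup>2 \<partial>M) + 2 * (\<integral>\<omega>. (norm (BB \<omega>))\<^sup>2 \<partial>M)"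
proof (cases "K = 1")
  case True
  have BBe: "BB = (\<lambda>\<omega>. \<Sum>j\<in>{1..N}. p j *\<^sub>R gF j (Wt \<omega>))"
    by (rule ext) (simp only: BB_def bb_def, simp add: True)
  have AAe: "AA \<omega> = (\<Sum>i\<in>{1..N}. p i *\<^sub>R nz i 0 \<omega>)" for \<omega>
    by (simp only: AA_def, simp add: True)
  have BBm: "BB \<in> borel_measurable (past M Wt X xi i 0)" if i: "i \<in> {1..N}" for i
    unfolding BBe
    by (intro borel_measurable_sum borel_measurable_scaleR borel_measurable_const measurable_compose[OF Wt_past gF_meas] i) auto
  have iAB: "integrable M (\<lambda>\<omega>. BB \<omega> \<bullet> nz i 0 \<omega>)" if i: "i \<in> {1..N}" for i
    using P.sqi_inner_int[OF sqi_BB sqi_nz[OF i]] True by simp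
  have cross: "(\<integral>\<omega>. AA \<omega> \<bullet> BB \<omega> \<partial>M) = 0"
  proof -
    have "(\<integral>\<omega>. AA \<omega> \<bullet> BB \<omega> \<partial>M) = (\<integral>\<omega>. (\<Sum>i\<in>{1..N}. p i * (BB \<omega> \<bullet> nz i 0 \<omega>)) \<partial>M)"
      by (subst inner_commute) (simp only: AAe inner_sum_right inner_scaleR_right)
    also have "\<dots> = (\<Sum>i\<in>{1..N}. \<integral>\<omega>. p i * (BB \<omega> \<bullet> nz i 0 \<omega>) \<partial>M)"
      by (rule Bochner_Integration.integral_sum) (use iAB in auto)
    also have "\<dots> = (\<Sum>i\<in>{1..N}. p i * (\<integral>\<omega>. BB \<omega> \<bullet> nz i 0 \<omega> \<partial>M))" by simp
    also have "\<dots> = 0"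
      by (rule sum.neutral) (use orth_nz[OF _ _ BBm sqi_BB] True in auto)
    finally show ?thesis .
  qed
  have eq: "(norm (AA \<omega> + BB \<omega>))\<^sup>2 = (norm (AA \<omega>))\<^sup>2 + 2 * (AA \<omega> \<bullet> BB \<omega>) + (norm (BB \<omega>))\<^sup>2" for \<omega>
    by (simp add: power2_norm_eq_inner algebra_simps inner_commute)
  have "(\<integral>\<omega>. (norm (Dl \<omega>))\<^sup>2 \<partial>M) = (\<integral>\<omega>. (norm (AA \<omega>))\<^sup>2 + 2 * (AA \<omega> \<bullet> BB \<omega>) + (norm (BB \<omega>))\<^sup>2 \<partial>M)"
    by (simp only: Dl_eq eq)
  also have "\<dots> = (\<integral>\<omega>. (norm (AA \<omega>))\<^sup>2 \<partial>M) + 2 * (\<integral>\<omega>. AA \<omega> \<bullet> BB \<omega> \<partial>M) + (\<integral>\<omega>. (norm (BB \<omega>))\<^sup>2 \<partial>M)"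
    using int_sq[OF sqi_AA] int_sq[OF sqi_BB] P.sqi_inner_int[OF sqi_AA sqi_BB] by simp
  finally show ?thesis using cross True by simp
next
  case False
  then have K2: "real K \<ge> 2" using K_pos by simp
  have pw: "(norm (Dl \<omega>))\<^sup>2 \<le> K * (norm (AA \<omega>))\<^sup>2 + 2 * (norm (BB \<omega>))\<^sup>2" for \<omega>
  proof -
    have c: "real K - 1 > 0" using K2 by simp
    have "(norm (Dl \<omega>))\<^sup>2 \<le> (1 + (real K - 1)) * (norm (AA \<omega>))\<^sup>2 + (1 + 1 / (real K - 1)) * (norm (BB \<omega>))\<^sup>2"
      unfolding Dl_eq by (rule young_sq[OF c])
    moreover have "1 / (real K - 1) \<le> 1" using K2 by simp
    then have "(1 + 1 / (real K - 1)) * (norm (BB \<omega>))\<^sup>2 \<le> 2 * (norm (BB \<omega>))\<^sup>2"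
      by (intro mult_right_mono) auto
    ultimately show ?thesis by simp
  qed
  have "(\<integral>\<omega>. (norm (Dl \<omega>))\<^sup>2 \<partial>M) \<le> (\<integral>\<omega>. K * (norm (AA \<omega>))\<^sup>2 + 2 * (norm (BB \<omega>))\<^sup>2 \<partial>M)"
    by (rule integral_mono[OF int_sq[OF sqi_Dl] _ pw]) (use int_sq[OF sqi_AA] int_sq[OF sqi_BB] in auto)
  also have "\<dots> = K * (\<integral>\<omega>. (norm (AA \<omega>))\<^sup>2 \<partial>M) + 2 * (\<integral>\<omega>. (norm (BB \<omega>))\<^sup>2 \<partial>M)"
    using int_sq[OF sqi_AA] int_sq[OF sqi_BB] by simp
  finally show ?thesis .
qed

lemma main:
  shows "(\<integral>\<omega>. f (V_next G eta Wt xi p N K \<omega>) \<partial>M)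
     \<le> (\<integral>\<omega>. f (Wt \<omega>) \<partial>M) - C * eta * K * (\<integral>\<omega>. (norm (gf (Wt \<omega>)))\<^sup>2 \<partial>M)
       + 3/2 * L\<^sup>2 * eta^3 * K\<^sup>2 * N * (sigma_l\<^sup>2 + 6 * K * sigma_g\<^sup>2) * (\<Sum>i\<in>{1..N}. (p i)\<^sup>2)
       + L * eta\<^sup>2 * K\<^sup>2 * N / 2 * sigma_l\<^sup>2 * (\<Sum>i\<in>{1..N}. (p i)\<^sup>2)"
proof -
  define If where "If = (\<integral>\<omega>. f (V_next G eta Wt xi p N K \<omega>) \<partial>M)"
  define F0 where "F0 = (\<integral>\<omega>. f (Wt \<omega>) \<partial>M)"
  define Q where "Q = (\<integral>\<omega>. gf (Wt \<omega>) \<bullet> Dl \<omega> \<partial>M)"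
  define Dn where "Dn = (\<integral>\<omega>. (norm (Dl \<omega>))\<^sup>2 \<partial>M)"
  define Bt where "Bt = (\<Sum>\<tau><K. \<integral>\<omega>. (norm (bb \<tau> \<omega>))\<^sup>2 \<partial>M)"
  define Dd where "Dd = (\<Sum>\<tau><K. \<integral>\<omega>. (norm (gf (Wt \<omega>) - bb \<tau> \<omega>))\<^sup>2 \<partial>M)"
  define R where "R = sigma_l\<^sup>2 + 6 * K * sigma_g\<^sup>2 + 6 * K * G2"
  define An where "An = (\<integral>\<omega>. (norm (AA \<omega>))\<^sup>2 \<partial>M)"
  define Bn where "Bn = (\<integral>\<omega>. (norm (BB \<omega>))\<^sup>2 \<partial>M)"
  have eta0: "eta \<ge> 0" by (rule eta_nonneg)
  have L0: "L \<ge> 0" by (rule L_nonneg)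
  have Bt0: "Bt \<ge> 0" unfolding Bt_def by (simp add: sum_nonneg)
  have G20: "G2 \<ge> 0" by simp
  have sp0: "sp \<ge> 0" by (simp add: sum_nonneg)
  have A: "If \<le> F0 - eta * Q + L * eta\<^sup>2 / 2 * Dn"
    unfolding If_def F0_def Q_def Dn_def by (rule step_A)
  have e1: "- eta * Q = eta / 2 * (Dd - K * G2 - Bt)"
  proof -
    have "- eta * Q = (\<Sum>\<tau><K. - eta * (\<integral>\<omega>. gf (Wt \<omega>) \<bullet> bb \<tau> \<omega> \<partial>M))"
      unfolding Q_def step_B by (simp add: sum_distrib_left)
    also have "\<dots> = (\<Sum>\<tau><K. eta / 2 * ((\<integral>\<omega>. (norm (gf (Wt \<omega>) - bb \<tau> \<omega>))\<^sup>2 \<partial>M) - G2 - (\<integral>\<omega>. (norm (bb \<tau> \<omega>))\<^sup>2 \<partial>M)))"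
      by (rule sum.cong[OF refl], rule step_C) simp
    also have "\<dots> = eta / 2 * (Dd - K * G2 - Bt)"
      unfolding Dd_def Bt_def sum_distrib_left[symmetric] sum_subtractf by simp
    finally show ?thesis .
  qed
  have e2: "Dd \<le> sp * L\<^sup>2 * (N * (3 * eta\<^sup>2 * K\<^sup>2 * R))"
  proof -
    have "Dd \<le> sp * L\<^sup>2 * (\<Sum>i\<in>{1..N}. \<Sum>\<tau><K. \<integral>\<omega>. (norm (W i \<tau> \<omega> - Wt \<omega>))\<^sup>2 \<partial>M)"
      unfolding Dd_def by (rule step_D)
    also have "(\<Sum>i\<in>{1..N}. \<Sum>\<tau><K. \<integral>\<omega>. (norm (W i \<tau> \<omega> - Wt \<omega>))\<^sup>2 \<partial>M) \<le> (\<Sum>i\<in>{1..N}. 3 * eta\<^sup>2 * K\<^sup>2 * R)"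
      unfolding R_def by (rule sum_mono) (rule drift)
    also have "(\<Sum>i\<in>{1..N}. 3 * eta\<^sup>2 * K\<^sup>2 * R) = N * (3 * eta\<^sup>2 * K\<^sup>2 * R)" by simp
    finally show ?thesis using sp0 by (simp add: mult_left_mono)
  qed
  have e3: "Dn \<le> K * (sp * N * K * sigma_l\<^sup>2) + 2 * (K * Bt)"
  proof -
    have "Dn \<le> K * An + 2 * Bn" unfolding Dn_def An_def Bn_def by (rule step_E)
    moreover have "K * An \<le> K * (sp * N * K * sigma_l\<^sup>2)" unfolding An_def using step_F by (simp add: mult_left_mono)
    moreover have "Bn \<le> K * Bt" unfolding Bn_def Bt_def by (rule step_G)
    ultimately show ?thesis by linarith
  qed
  have f1: "eta / 2 * Dd \<le> eta / 2 * (sp * L\<^sup>2 * (N * (3 * eta\<^sup>2 * K\<^sup>2 * R)))"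
    using e2 eta0 by (simp add: mult_left_mono)
  have f2: "L * eta\<^sup>2 / 2 * Dn \<le> L * eta\<^sup>2 / 2 * (K * (sp * N * K * sigma_l\<^sup>2) + 2 * (K * Bt))"
    using e3 eta0 L0 by (simp add: mult_left_mono)
  have f3: "(L * eta * K) * (eta * Bt) \<le> 1/4 * (eta * Bt)"
    by (rule mult_right_mono[OF LetaK]) (use eta0 Bt0 in simp)
  have f4: "(eta * K * G2) * C \<le> (eta * K * G2) * (1/2 - 9 * L\<^sup>2 * eta\<^sup>2 * K\<^sup>2 * N * sp)"
    by (rule mult_left_mono[OF step1]) (use eta0 G20 in simp)
  have "If \<le> F0 + eta / 2 * (sp * L\<^sup>2 * (N * (3 * eta\<^sup>2 * K\<^sup>2 * R))) - eta / 2 * (K * G2) - eta / 2 * Bt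
           + L * eta\<^sup>2 / 2 * (K * (sp * N * K * sigma_l\<^sup>2)) + (L * eta * K) * (eta * Bt)"
  proof -
    have x: "eta / 2 * (Dd - K * G2 - Bt) = eta / 2 * Dd - eta / 2 * (K * G2) - eta / 2 * Bt"
      by (simp add: algebra_simps)
    have y: "L * eta\<^sup>2 / 2 * (K * (sp * N * K * sigma_l\<^sup>2) + 2 * (K * Bt)) = L * eta\<^sup>2 / 2 * (K * (sp * N * K * sigma_l\<^sup>2)) + (L * eta * K) * (eta * Bt)"
      by (simp add: algebra_simps power2_eq_square)
    show ?thesis using A e1 x y f1 f2 by linarith
  qed
  also have "\<dots> \<le> F0 + eta / 2 * (sp * L\<^sup>2 * (N * (3 * eta\<^sup>2 * K\<^sup>2 * R))) - eta / 2 * (K * G2)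
           + L * eta\<^sup>2 / 2 * (K * (sp * N * K * sigma_l\<^sup>2))"
  proof -
    have "eta / 2 * Bt = 1/2 * (eta * Bt)" by simp
    moreover have "eta * Bt \<ge> 0" using eta0 Bt0 by simp
    ultimately show ?thesis using f3 by linarith
  qed
  also have "\<dots> = F0 - (eta * K * G2) * (1/2 - 9 * L\<^sup>2 * eta\<^sup>2 * K\<^sup>2 * N * sp)
       + 3/2 * L\<^sup>2 * eta^3 * K\<^sup>2 * N * (sigma_l\<^sup>2 + 6 * K * sigma_g\<^sup>2) * sp
       + L * eta\<^sup>2 * K\<^sup>2 * N / 2 * sigma_l\<^sup>2 * sp"
    unfolding R_def by (simp add: algebra_simps power2_eq_square power3_eq_cube)
  also have "\<dots> \<le> F0 - (eta * K * G2) * C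
       + 3/2 * L\<^sup>2 * eta^3 * K\<^sup>2 * N * (sigma_l\<^sup>2 + 6 * K * sigma_g\<^sup>2) * sp
       + L * eta\<^sup>2 * K\<^sup>2 * N / 2 * sigma_l\<^sup>2 * sp"
    using f4 by linarith
  finally show ?thesis unfolding If_def F0_def by (simp add: algebra_simps)
qed

end

theorem lemma2:
  fixes M :: "'w measure" and X :: "'x measure"
    and N K :: nat and L eta C sigma_l sigma_g :: real
    and p :: "nat \<Rightarrow> real"
    and f :: "real^'k^'d \<Rightarrow> real" and gf :: "real^'k^'d \<Rightarrow> real^'k^'d"
    and F :: "nat \<Rightarrow> real^'k^'d \<Rightarrow> real" and gF :: "nat \<Rightarrow> real^'k^'d \<Rightarrow> real^'k^'d"
    and ell :: "nat \<Rightarrow> 'x \<Rightarrow> real^'k^'d \<Rightarrow> real"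
    and G :: "nat \<Rightarrow> real^'k^'d \<Rightarrow> 'x \<Rightarrow> real^'k^'d"
    and Wt :: "'w \<Rightarrow> real^'k^'d"
    and xi :: "nat \<Rightarrow> nat \<Rightarrow> 'w \<Rightarrow> 'x"
  assumes prob: "prob_space M"
    and N_pos: "N \<ge> 1" and K_pos: "K \<ge> 1"
    and p_nonneg: "\<And>i. i \<in> {1..N} \<Longrightarrow> p i \<ge> 0"
    and p_sum: "(\<Sum>i\<in>{1..N}. p i) = 1"
    and f_def: "\<And>W. f W = (\<Sum>i\<in>{1..N}. p i * F i W)"
    (* differentiability; gf, gF i, G i _ x are the gradients *)
    and f_grad: "\<And>W. (f has_derivative (\<lambda>h. gf W \<bullet> h)) (at W)"
    and F_grad: "\<And>i W. i \<in> {1..N} \<Longrightarrow> (F i has_derivative (\<lambda>h. gF i W \<bullet> h)) (at W)"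
    and ell_grad: "\<And>i x W. i \<in> {1..N} \<Longrightarrow>
                     (ell i x has_derivative (\<lambda>h. G i W x \<bullet> h)) (at W)"
    (* (A1) *)
    and A1_f: "\<And>W W'. norm (gf W - gf W') \<le> L * norm (W - W')"
    and A1_F: "\<And>i W W'. i \<in> {1..N} \<Longrightarrow> norm (gF i W - gF i W') \<le> L * norm (W - W')"
    and A1_ell: "\<And>i x W W'. i \<in> {1..N} \<Longrightarrow> norm (G i W x - G i W' x) \<le> L * norm (W - W')"
    (* measurability of the random objects *)
    and Wt_meas: "Wt \<in> borel_measurable M"
    and xi_meas: "\<And>i \<tau>. i \<in> {1..N} \<Longrightarrow> \<tau> < K \<Longrightarrow> xi i \<tau> \<in> M \<rightarrow>\<^sub>M X"
    and G_meas: "\<And>i. i \<in> {1..N} \<Longrightarrow> (\<lambda>(W, x). G i W x) \<in> borel_measurable (borel \<Otimes>\<^sub>M X)"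
    (* (A2): conditionally on the past, unbiased with bounded variance *)
    and A2_integrable: "\<And>i \<tau>. i \<in> {1..N} \<Longrightarrow> \<tau> < K \<Longrightarrow>
        integrable M (\<lambda>\<omega>. (norm (G i (loc_iter G eta Wt xi i \<tau> \<omega>) (xi i \<tau> \<omega>)))\<^sup>2)"
    and A2_unbiased: "\<And>i \<tau> v. i \<in> {1..N} \<Longrightarrow> \<tau> < K \<Longrightarrow>
        AE \<omega> in M. real_cond_exp M (past M Wt X xi i \<tau>)
            (\<lambda>\<omega>. G i (loc_iter G eta Wt xi i \<tau> \<omega>) (xi i \<tau> \<omega>) \<bullet> v) \<omega>
          = gF i (loc_iter G eta Wt xi i \<tau> \<omega>) \<bullet> v"
    and A2_var: "\<And>i \<tau>. i \<in> {1..N} \<Longrightarrow> \<tau> < K \<Longrightarrow>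
        AE \<omega> in M. real_cond_exp M (past M Wt X xi i \<tau>)
            (\<lambda>\<omega>. (norm (G i (loc_iter G eta Wt xi i \<tau> \<omega>) (xi i \<tau> \<omega>)
                          - gF i (loc_iter G eta Wt xi i \<tau> \<omega>)))\<^sup>2) \<omega>
          \<le> sigma_l\<^sup>2"
    (* (A3) *)
    and A3: "\<And>i W. i \<in> {1..N} \<Longrightarrow> (norm (gf W - gF i W))\<^sup>2 \<le> sigma_g\<^sup>2"
    and sigma_g_pos: "sigma_g\<^sup>2 > 0"
    (* the expectations on the right-hand side exist *)
    and int_f: "integrable M (\<lambda>\<omega>. f (Wt \<omega>))"
    and int_grad: "integrable M (\<lambda>\<omega>. (norm (gf (Wt \<omega>)))\<^sup>2)"
    (* step-size conditions *)
    and C_pos: "C > 0"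
    and step1: "1/2 - 9 * L\<^sup>2 * eta\<^sup>2 * K\<^sup>2 * N * (\<Sum>i\<in>{1..N}. (p i)\<^sup>2) \<ge> C"
    and step2: "L * eta\<^sup>2 * K / 2 - eta / 2 \<le> 0"
  shows "(\<integral>\<omega>. f (V_next G eta Wt xi p N K \<omega>) \<partial>M)
     \<le> (\<integral>\<omega>. f (Wt \<omega>) \<partial>M) - C * eta * K * (\<integral>\<omega>. (norm (gf (Wt \<omega>)))\<^sup>2 \<partial>M)
       + 3/2 * L\<^sup>2 * eta^3 * K\<^sup>2 * N * (sigma_l\<^sup>2 + 6 * K * sigma_g\<^sup>2) * (\<Sum>i\<in>{1..N}. (p i)\<^sup>2)
       + L * eta\<^sup>2 * K\<^sup>2 * N / 2 * sigma_l\<^sup>2 * (\<Sum>i\<in>{1..N}. (p i)\<^sup>2)"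
  proof -
  interpret fl M X N K L eta sigma_l sigma_g p f gf F gF G Wt xi C
    by (rule fl.intro; fact)
  show ?thesis by (rule main)
qed

end
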